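(* Let $\lambda$ be a partition with at most $n$ parts. Let $s+1$ be the number of distinct values in $\lambda$ after padding with zeros to length $n$ (equivalently, $s$ is the largest part of the reduction $\nu$ of $\lambda$). Then the moment variety $\mathcal{M}_{n,\lambda}=\mathcal{M}_{n,\nu}$ has dimension $(n-1)s$.
   Context: Work over $\mathbb{C}$. For a partition $\lambda$ of $d$ with at most $n$ parts, $N_\lambda$ is the set of index vectors $(i_1,\ldots,i_n)\in\mathbb{Z}_{\ge0}^n$ whose multiset of nonzero entries equals $\lambda$. The variety $\mathcal{M}_{n,\lambda}\subset\mathbb{P}^{|N_\lambda|-1}$ is the Zariski closure of the image of $(\mu_{ki})\mapsto(\mu_{1i_1}\cdots\mu_{ni_n})_{(i_1,\ldots,i_n)\in N_\lambda}$, with $\mu_{k0}=1$. Reduction: if the distinct values of the zero-padded $\lambda$ have multiplicities $k_0\ge\cdots\ge k_s$, the reduction is $\nu=(s^{k_s},(s-1)^{k_{s-1}},\ldots,1^{k_1},0^{k_0})$. The variety $\mathcal{M}_{n,\nu}$ is defined in the same way, and it is identified with $\mathcal{M}_{n,\lambda}$ by relabeling the index values. *)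

theory Defs
  imports Complex_Main "HOL-Library.Poly_Mapping" "HOL-Library.Multiset"
begin

definition index_set :: "nat \<Rightarrow> nat list \<Rightarrow> nat list set" where
  "index_set n lam = {is. length is = n \<and> mset (filter (\<lambda>i. i \<noteq> 0) is) = mset lam}"

definition is_partition :: "nat list \<Rightarrow> bool" where
  "is_partition lam \<longleftrightarrow> sorted_wrt (\<ge>) lam \<and> (\<forall>x\<in>set lam. 0 < x)"

type_synonym 'v cpoly = "('v \<Rightarrow>\<^sub>0 nat) \<Rightarrow>\<^sub>0 complex"

definition mono_deg :: "('v \<Rightarrow>\<^sub>0 nat) \<Rightarrow> nat" where
  "mono_deg m = (\<Sum>v\<in>Poly_Mapping.keys m. Poly_Mapping.lookup m v)"

definition cpoly_eval :: "'v cpoly \<Rightarrow> ('v \<Rightarrow> complex) \<Rightarrow> complex" where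
  "cpoly_eval p x = (\<Sum>m\<in>Poly_Mapping.keys p. Poly_Mapping.lookup p m * (\<Prod>v\<in>Poly_Mapping.keys m. x v ^ Poly_Mapping.lookup m v))"

definition homogeneous :: "'v cpoly \<Rightarrow> bool" where
  "homogeneous p \<longleftrightarrow> (\<exists>d. \<forall>m\<in>Poly_Mapping.keys p. mono_deg m = d)"

text \<open>Projective space P(C^N), N a set of coordinates, realised as the nonzero vectors
  supported on N (closed sets are cones, so chains of closed irreducible subsets
  correspond exactly to those of the quotient by scaling).\<close>

definition proj_points :: "'v set \<Rightarrow> ('v \<Rightarrow> complex) set" where
  "proj_points N = {x. (\<forall>v. v \<notin> N \<longrightarrow> x v = 0) \<and> (\<exists>v. x v \<noteq> 0)}"

definition proj_closed :: "'v set \<Rightarrow> ('v \<Rightarrow> complex) set \<Rightarrow> bool" where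
  "proj_closed N S \<longleftrightarrow> (\<exists>F. (\<forall>f\<in>F. homogeneous f) \<and>
      S = {x \<in> proj_points N. \<forall>f\<in>F. cpoly_eval f x = 0})"

definition zariski_closure :: "'v set \<Rightarrow> ('v \<Rightarrow> complex) set \<Rightarrow> ('v \<Rightarrow> complex) set" where
  "zariski_closure N A = \<Inter>{S. proj_closed N S \<and> A \<subseteq> S}"

definition proj_irreducible :: "'v set \<Rightarrow> ('v \<Rightarrow> complex) set \<Rightarrow> bool" where
  "proj_irreducible N Z \<longleftrightarrow> proj_closed N Z \<and> Z \<noteq> {} \<and>
     (\<forall>A B. proj_closed N A \<longrightarrow> proj_closed N B \<longrightarrow> Z = A \<union> B \<longrightarrow> Z = A \<or> Z = B)"

definition has_irred_chain :: "'v set \<Rightarrow> ('v \<Rightarrow> complex) set \<Rightarrow> nat \<Rightarrow> bool" where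
  "has_irred_chain N X k \<longleftrightarrow> (\<exists>Z :: nat \<Rightarrow> ('v \<Rightarrow> complex) set.
      (\<forall>i\<le>k. proj_irreducible N (Z i) \<and> Z i \<subseteq> X) \<and> (\<forall>i<k. Z i \<subset> Z (Suc i)))"

definition proj_dim_eq :: "'v set \<Rightarrow> ('v \<Rightarrow> complex) set \<Rightarrow> nat \<Rightarrow> bool" where
  "proj_dim_eq N X d \<longleftrightarrow> has_irred_chain N X d \<and> \<not> has_irred_chain N X (Suc d)"

definition moment_point :: "nat \<Rightarrow> nat list \<Rightarrow> (nat \<Rightarrow> nat \<Rightarrow> complex) \<Rightarrow> nat list \<Rightarrow> complex" where
  "moment_point n lam mu is = (if is \<in> index_set n lam
      then (\<Prod>k<n. if is ! k = 0 then 1 else mu k (is ! k)) else 0)"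

definition moment_variety :: "nat \<Rightarrow> nat list \<Rightarrow> (nat list \<Rightarrow> complex) set" where
  "moment_variety n lam = zariski_closure (index_set n lam)
      ({moment_point n lam mu | mu. True} \<inter> proj_points (index_set n lam))"

end

theory Submission
  imports Defs "HOL-Library.Function_Algebras" "HOL-Computational_Algebra.Polynomial"
begin

definition mnm :: "('v \<Rightarrow>\<^sub>0 nat) \<Rightarrow> ('v \<Rightarrow> complex) \<Rightarrow> complex" where
  "mnm m x = (\<Prod>v\<in>Poly_Mapping.keys m. x v ^ Poly_Mapping.lookup m v)"

lemma mnm_superset:
  assumes "finite V" "Poly_Mapping.keys m \<subseteq> V"
  shows "mnm m x = (\<Prod>v\<in>V. x v ^ Poly_Mapping.lookup m v)"
  unfolding mnm_def
  by (rule prod.mono_neutral_left) (use assms in \<open>auto simp: in_keys_iff\<close>)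

lemma mnm_add: "mnm (m + m') x = mnm m x * mnm m' x"
proof -
  let ?V = "Poly_Mapping.keys m \<union> Poly_Mapping.keys m'"
  have "mnm (m + m') x = (\<Prod>v\<in>?V. x v ^ Poly_Mapping.lookup (m + m') v)"
    by (rule mnm_superset) (auto dest: subsetD[OF keys_add])
  also have "\<dots> = (\<Prod>v\<in>?V. x v ^ Poly_Mapping.lookup m v * x v ^ Poly_Mapping.lookup m' v)"
    by (simp add: lookup_add power_add)
  also have "\<dots> = mnm m x * mnm m' x"
    by (simp add: prod.distrib mnm_superset[of ?V m] mnm_superset[of ?V m'])
  finally show ?thesis .
qed

lemma mnm_zero [simp]: "mnm 0 x = 1"
  by (simp add: mnm_def)

lemma mnm_single [simp]: "mnm (Poly_Mapping.single v k) x = x v ^ k"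
  by (simp add: mnm_def)

lemma mnm_scale: "mnm m (\<lambda>v. t * x v) = t ^ mono_deg m * mnm m x"
  by (simp add: mnm_def mono_deg_def power_mult_distrib prod.distrib power_sum)

lemma cpoly_eval_mono: "cpoly_eval p x = (\<Sum>m\<in>Poly_Mapping.keys p. Poly_Mapping.lookup p m * mnm m x)"
  by (simp add: cpoly_eval_def mnm_def)

lemma cpoly_eval_superset:
  assumes "finite M" "Poly_Mapping.keys p \<subseteq> M"
  shows "cpoly_eval p x = (\<Sum>m\<in>M. Poly_Mapping.lookup p m * mnm m x)"
  unfolding cpoly_eval_mono
  by (rule sum.mono_neutral_left) (use assms in \<open>auto simp: in_keys_iff\<close>)

lemma cpoly_eval_add: "cpoly_eval (p + q) x = cpoly_eval p x + cpoly_eval q x"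
proof -
  let ?M = "Poly_Mapping.keys p \<union> Poly_Mapping.keys q"
  have "cpoly_eval (p + q) x = (\<Sum>m\<in>?M. Poly_Mapping.lookup (p + q) m * mnm m x)"
    by (rule cpoly_eval_superset) (auto dest: subsetD[OF keys_add])
  also have "\<dots> = (\<Sum>m\<in>?M. Poly_Mapping.lookup p m * mnm m x) + (\<Sum>m\<in>?M. Poly_Mapping.lookup q m * mnm m x)"
    by (simp add: lookup_add distrib_right sum.distrib)
  also have "\<dots> = cpoly_eval p x + cpoly_eval q x"
    by (simp add: cpoly_eval_superset[of ?M p] cpoly_eval_superset[of ?M q])
  finally show ?thesis .
qed

lemma cpoly_eval_single [simp]: "cpoly_eval (Poly_Mapping.single m c) x = c * mnm m x"
  by (simp add: cpoly_eval_mono)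

lemma cpoly_eval_zero [simp]: "cpoly_eval 0 x = 0"
  by (simp add: cpoly_eval_mono)

lemma cpoly_eval_scale:
  assumes "\<forall>m\<in>Poly_Mapping.keys p. mono_deg m = d"
  shows "cpoly_eval p (\<lambda>v. t * x v) = t ^ d * cpoly_eval p x"
  using assms by (simp add: cpoly_eval_mono mnm_scale sum_distrib_left mult_ac)

definition lval :: "(complex \<times> ('v \<Rightarrow>\<^sub>0 nat)) list \<Rightarrow> ('v \<Rightarrow> complex) \<Rightarrow> complex" where
  "lval L x = (\<Sum>(c, m)\<leftarrow>L. c * mnm m x)"

definition lvars :: "(complex \<times> ('v \<Rightarrow>\<^sub>0 nat)) list \<Rightarrow> 'v set" where
  "lvars L = (\<Union>p\<in>set L. Poly_Mapping.keys (snd p))"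

definition PF :: "'v set \<Rightarrow> (('v \<Rightarrow> complex) \<Rightarrow> complex) set" where
  "PF S = {lval L | L. lvars L \<subseteq> S}"

lemma lval_Nil [simp]: "lval [] x = 0" by (simp add: lval_def)
lemma lval_Cons [simp]: "lval ((c, m) # L) x = c * mnm m x + lval L x" by (simp add: lval_def)
lemma lval_append [simp]: "lval (L1 @ L2) x = lval L1 x + lval L2 x" by (simp add: lval_def)
lemma lvars_Nil [simp]: "lvars [] = {}" by (simp add: lvars_def)
lemma lvars_Cons [simp]: "lvars ((c, m) # L) = Poly_Mapping.keys m \<union> lvars L" by (simp add: lvars_def)
lemma lvars_append [simp]: "lvars (L1 @ L2) = lvars L1 \<union> lvars L2" by (simp add: lvars_def)

definition lmult where
  "lmult L1 L2 = concat (map (\<lambda>(c, m). map (\<lambda>(c', m'). (c * c', m + m')) L2) L1)"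

lemma lval_map_mult:
  "lval (map (\<lambda>(c', m'). (c * c', m + m')) L2) x = c * mnm m x * lval L2 x"
  proof (induction L2)
  case Nil then show ?case by simp
next
  case (Cons a L2)
  obtain c' m' where a: "a = (c', m')" by force
  show ?case using Cons by (simp add: a mnm_add distrib_left mult_ac)
qed

lemma lval_lmult: "lval (lmult L1 L2) x = lval L1 x * lval L2 x"
  proof (induction L1)
  case Nil then show ?case by (simp add: lmult_def)
next
  case (Cons a L1)
  obtain c m where a: "a = (c, m)" by force
  have "lval (lmult (a # L1) L2) x = lval (map (\<lambda>(c', m'). (c * c', m + m')) L2) x + lval (lmult L1 L2) x"
    by (simp add: lmult_def a)
  then show ?case using Cons by (simp add: a lval_map_mult distrib_right)
qed

lemma lvars_lmult: "lvars (lmult L1 L2) \<subseteq> lvars L1 \<union> lvars L2"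
proof (induction L1)
  case Nil then show ?case by (simp add: lmult_def)
next
  case (Cons a L1)
  obtain c m where a: "a = (c, m)" by force
  have 1: "lvars (map (\<lambda>(c', m'). (c * c', m + m')) L2) \<subseteq> Poly_Mapping.keys m \<union> lvars L2" for L2
  proof (induction L2)
    case Nil then show ?case by simp
  next
    case (Cons b L2)
    obtain c' m' where b: "b = (c', m')" by force
    show ?case using Cons keys_add[of m m'] by (auto simp: b)
  qed
  have "lvars (lmult (a # L1) L2) = lvars (map (\<lambda>(c', m'). (c * c', m + m')) L2) \<union> lvars (lmult L1 L2)"
    by (simp add: lmult_def a)
  then show ?case using Cons 1[of L2] by (auto simp: a)
qed


lemma PF_I: "lvars L \<subseteq> S \<Longrightarrow> f = lval L \<Longrightarrow> f \<in> PF S"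
  unfolding PF_def by blast

lemma PF_E: assumes "f \<in> PF S" obtains L where "lvars L \<subseteq> S" "f = lval L"
  using assms unfolding PF_def by blast

lemma PF_const: "(\<lambda>x. c) \<in> PF S"
  by (rule PF_I[of "[(c, 0)]"]) (auto simp: fun_eq_iff)

lemma PF_var: "v \<in> S \<Longrightarrow> (\<lambda>x. x v) \<in> PF S"
  by (rule PF_I[of "[(1, Poly_Mapping.single v 1)]"]) (auto simp: fun_eq_iff)

lemma PF_add:
  assumes "f \<in> PF S" "g \<in> PF S" shows "(\<lambda>x. f x + g x) \<in> PF S"
proof -
  obtain L1 where "lvars L1 \<subseteq> S" "f = lval L1" using assms(1) by (rule PF_E)
  moreover obtain L2 where "lvars L2 \<subseteq> S" "g = lval L2" using assms(2) by (rule PF_E)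
  ultimately show ?thesis by (intro PF_I[of "L1 @ L2"]) (auto simp: fun_eq_iff)
qed

lemma PF_mult:
  assumes "f \<in> PF S" "g \<in> PF S" shows "(\<lambda>x. f x * g x) \<in> PF S"
proof -
  obtain L1 where "lvars L1 \<subseteq> S" "f = lval L1" using assms(1) by (rule PF_E)
  moreover obtain L2 where "lvars L2 \<subseteq> S" "g = lval L2" using assms(2) by (rule PF_E)
  ultimately show ?thesis
    by (intro PF_I[of "lmult L1 L2"]) (use lvars_lmult[of L1 L2] in \<open>auto simp: fun_eq_iff lval_lmult\<close>)
qed

lemma PF_neg: "f \<in> PF S \<Longrightarrow> (\<lambda>x. - f x) \<in> PF S"
  using PF_mult[OF PF_const[of "-1"]] by simp

lemma PF_diff: "f \<in> PF S \<Longrightarrow> g \<in> PF S \<Longrightarrow> (\<lambda>x. f x - g x) \<in> PF S"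
  using PF_add[OF _ PF_neg, of f S g] by simp

lemma PF_sum: "finite I \<Longrightarrow> (\<And>i. i \<in> I \<Longrightarrow> f i \<in> PF S) \<Longrightarrow> (\<lambda>x. \<Sum>i\<in>I. f i x) \<in> PF S"
proof (induction I rule: finite_induct)
  case empty then show ?case using PF_const[of 0 S] by simp
next
  case (insert i I)
  then show ?case using PF_add[of "f i" S "\<lambda>x. \<Sum>i\<in>I. f i x"] by simp
qed

lemma PF_prod: "finite I \<Longrightarrow> (\<And>i. i \<in> I \<Longrightarrow> f i \<in> PF S) \<Longrightarrow> (\<lambda>x. \<Prod>i\<in>I. f i x) \<in> PF S"
proof (induction I rule: finite_induct)
  case empty then show ?case using PF_const[of 1 S] by simp
next
  case (insert i I)
  then show ?case using PF_mult[of "f i" S "\<lambda>x. \<Prod>i\<in>I. f i x"] by simp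
qed

lemma PF_power: "f \<in> PF S \<Longrightarrow> (\<lambda>x. f x ^ k) \<in> PF S"
proof (induction k)
  case 0 then show ?case using PF_const[of 1 S] by simp
next
  case (Suc k)
  then show ?case using PF_mult[of f S "\<lambda>x. f x ^ k"] by simp
qed

lemma PF_mono: "S \<subseteq> T \<Longrightarrow> PF S \<subseteq> PF T"
  by (auto elim!: PF_E intro: PF_I)

lemma PF_lval: "lval L \<in> PF UNIV"
  by (rule PF_I[of L]) auto

lemma PF_cpoly: "cpoly_eval p \<in> PF UNIV"
proof -
  obtain xs where xs: "set xs = Poly_Mapping.keys p" "distinct xs"
    using finite_distinct_list[OF finite_keys[of p]] by (elim exE conjE)
  have eq: "cpoly_eval p = lval (map (\<lambda>m. (Poly_Mapping.lookup p m, m)) xs)"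
  proof (rule ext)
    fix x
    have "lval (map (\<lambda>m. (Poly_Mapping.lookup p m, m)) xs) x = (\<Sum>m\<leftarrow>xs. Poly_Mapping.lookup p m * mnm m x)"
      unfolding lval_def map_map o_def by simp
    also have "\<dots> = (\<Sum>m\<in>set xs. Poly_Mapping.lookup p m * mnm m x)"
      by (rule sum_list_distinct_conv_sum_set) (rule xs(2))
    finally show "cpoly_eval p x = lval (map (\<lambda>m. (Poly_Mapping.lookup p m, m)) xs) x"
      by (simp add: xs(1) cpoly_eval_mono)
  qed
  show ?thesis unfolding eq by (rule PF_lval)
qed

definition cp :: "(complex \<times> ('v \<Rightarrow>\<^sub>0 nat)) list \<Rightarrow> 'v cpoly" where
  "cp L = (\<Sum>(c, m)\<leftarrow>L. Poly_Mapping.single m c)"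

lemma cp_Nil [simp]: "cp [] = 0" by (simp add: cp_def)
lemma cp_Cons [simp]: "cp ((c, m) # L) = Poly_Mapping.single m c + cp L" by (simp add: cp_def)

lemma cpoly_eval_cp: "cpoly_eval (cp L) x = lval L x"
proof (induction L)
  case Nil then show ?case by simp
next
  case (Cons a L)
  obtain c m where a: "a = (c, m)" by force
  show ?case using Cons by (simp add: a cpoly_eval_add)
qed

lemma keys_cp: "Poly_Mapping.keys (cp L) \<subseteq> snd ` set L"
proof (induction L)
  case Nil then show ?case by simp
next
  case (Cons a L)
  obtain c m where a: "a = (c, m)" by force
  show ?case using Cons keys_add[of "Poly_Mapping.single m c" "cp L"] by (auto simp: a split: if_splits)
qed

lemma homogeneous_cp:
  assumes "\<forall>(c, m)\<in>set L. mono_deg m = d" shows "homogeneous (cp L)"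
  unfolding homogeneous_def
proof (intro exI[of _ d] ballI)
  fix m assume "m \<in> Poly_Mapping.keys (cp L)"
  then have "m \<in> snd ` set L" using keys_cp[of L] by blast
  then obtain c where "(c, m) \<in> set L" by force
  then show "mono_deg m = d" using assms by blast
qed

lemma closed_sub: "proj_closed N S \<Longrightarrow> S \<subseteq> proj_points N"
  unfolding proj_closed_def by auto

lemma closed_pp: "proj_closed N (proj_points N)"
  unfolding proj_closed_def by (rule exI[of _ "{}"]) auto

lemma closed_inter_V:
  assumes "proj_closed N Z" "homogeneous f"
  shows "proj_closed N {x\<in>Z. cpoly_eval f x = 0}"
proof -
  obtain F where F: "\<forall>f\<in>F. homogeneous f" "Z = {x \<in> proj_points N. \<forall>f\<in>F. cpoly_eval f x = 0}"
    using assms(1) unfolding proj_closed_def by blast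
  show ?thesis unfolding proj_closed_def
    by (rule exI[of _ "insert f F"]) (use F assms(2) in auto)
qed

lemma closed_inter_lval:
  assumes "proj_closed N Z" "\<forall>(c, m)\<in>set L. mono_deg m = d"
  shows "proj_closed N {x\<in>Z. lval L x = 0}"
  using closed_inter_V[OF assms(1) homogeneous_cp[OF assms(2)]] by (simp add: cpoly_eval_cp)

lemma closed_Inter:
  assumes "\<SS> \<noteq> {}" "\<forall>S\<in>\<SS>. proj_closed N S"
  shows "proj_closed N (\<Inter>\<SS>)"
proof -
  have "\<forall>S\<in>\<SS>. \<exists>F. (\<forall>f\<in>F. homogeneous f) \<and> S = {x \<in> proj_points N. \<forall>f\<in>F. cpoly_eval f x = 0}"
    using assms(2) unfolding proj_closed_def by blast
  then obtain FF where FF0: "\<forall>S\<in>\<SS>. (\<forall>f\<in>FF S. homogeneous f) \<and> S = {x \<in> proj_points N. \<forall>f\<in>FF S. cpoly_eval f x = 0}"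
    by (auto dest: bchoice)
  then have FF: "\<And>S. S \<in> \<SS> \<Longrightarrow> (\<forall>f\<in>FF S. homogeneous f) \<and> S = {x \<in> proj_points N. \<forall>f\<in>FF S. cpoly_eval f x = 0}"
    by blast
  have "\<Inter>\<SS> = {x \<in> proj_points N. \<forall>f\<in>(\<Union>S\<in>\<SS>. FF S). cpoly_eval f x = 0}"
  proof (intro equalityI subsetI)
    fix x assume x: "x \<in> \<Inter>\<SS>"
    obtain S0 where "S0 \<in> \<SS>" using assms(1) by blast
    then have "x \<in> proj_points N" using x FF[of S0] by auto
    moreover have "\<forall>f\<in>(\<Union>S\<in>\<SS>. FF S). cpoly_eval f x = 0"
    proof
      fix f assume "f \<in> (\<Union>S\<in>\<SS>. FF S)"
      then obtain S where S: "S \<in> \<SS>" "f \<in> FF S" by blast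
      then have "x \<in> S" using x by blast
      then show "cpoly_eval f x = 0" using FF[OF S(1)] S(2) by blast
    qed
    ultimately show "x \<in> {x \<in> proj_points N. \<forall>f\<in>(\<Union>S\<in>\<SS>. FF S). cpoly_eval f x = 0}" by blast
  next
    fix x assume x: "x \<in> {x \<in> proj_points N. \<forall>f\<in>(\<Union>S\<in>\<SS>. FF S). cpoly_eval f x = 0}"
    show "x \<in> \<Inter>\<SS>"
    proof
      fix S assume S: "S \<in> \<SS>"
      show "x \<in> S" using x FF[OF S] S by blast
    qed
  qed
  moreover have "\<forall>f\<in>(\<Union>S\<in>\<SS>. FF S). homogeneous f" using FF by blast
  ultimately show ?thesis unfolding proj_closed_def by blast
qed

lemma zc_closed: "A \<subseteq> proj_points N \<Longrightarrow> proj_closed N (zariski_closure N A)"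
  unfolding zariski_closure_def
  by (rule closed_Inter) (use closed_pp[of N] in auto)

lemma zc_least: "proj_closed N S \<Longrightarrow> A \<subseteq> S \<Longrightarrow> zariski_closure N A \<subseteq> S"
  unfolding zariski_closure_def by blast

lemma zc_ext: "A \<subseteq> proj_points N \<Longrightarrow> A \<subseteq> zariski_closure N A"
  unfolding zariski_closure_def by blast

lemma zc_mono: "A \<subseteq> B \<Longrightarrow> zariski_closure N A \<subseteq> zariski_closure N B"
  unfolding zariski_closure_def by blast

lemma cone:
  assumes "proj_closed N Z" "x \<in> Z" "t \<noteq> 0"
  shows "(\<lambda>v. t * x v) \<in> Z"
proof -
  obtain F where F: "\<forall>f\<in>F. homogeneous f" "Z = {x \<in> proj_points N. \<forall>f\<in>F. cpoly_eval f x = 0}"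
    using assms(1) unfolding proj_closed_def by blast
  have xF: "x \<in> proj_points N" "\<forall>f\<in>F. cpoly_eval f x = 0" using assms(2) unfolding F(2) by auto
  have "cpoly_eval f (\<lambda>v. t * x v) = 0" if "f \<in> F" "cpoly_eval f x = 0" for f
  proof -
    have "homogeneous f" using F(1) that(1) by blast
    then obtain d where d: "\<forall>m\<in>Poly_Mapping.keys f. mono_deg m = d"
      unfolding homogeneous_def by blast
    have "cpoly_eval f (\<lambda>v. t * x v) = t ^ d * cpoly_eval f x"
      by (rule cpoly_eval_scale) (rule d)
    then show ?thesis using that(2) by simp
  qed
  then have 1: "\<forall>f\<in>F. cpoly_eval f (\<lambda>v. t * x v) = 0" using xF(2) by blast
  have 2: "(\<lambda>v. t * x v) \<in> proj_points N"
  proof -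
    obtain v where "x v \<noteq> 0" using \<open>x \<in> proj_points N\<close> unfolding proj_points_def by blast
    then have "t * x v \<noteq> 0" using assms(3) by simp
    then show ?thesis using \<open>x \<in> proj_points N\<close> unfolding proj_points_def by auto
  qed
  show ?thesis unfolding F(2) using 1 2 by blast
qed

definition tpoly :: "(complex \<times> ('v \<Rightarrow>\<^sub>0 nat)) list \<Rightarrow> ('v \<Rightarrow> complex) \<Rightarrow> complex poly" where
  "tpoly L x = (\<Sum>(c, m)\<leftarrow>L. monom (c * mnm m x) (mono_deg m))"

definition hpart :: "nat \<Rightarrow> (complex \<times> ('v \<Rightarrow>\<^sub>0 nat)) list \<Rightarrow> (complex \<times> ('v \<Rightarrow>\<^sub>0 nat)) list" where
  "hpart d L = filter (\<lambda>(c, m). mono_deg m = d) L"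

lemma hpart_deg: "\<forall>(c, m)\<in>set (hpart d L). mono_deg m = d"
  unfolding hpart_def by auto

lemma poly_tpoly: "poly (tpoly L x) t = lval L (\<lambda>v. t * x v)"
proof (induction L)
  case Nil then show ?case by (simp add: tpoly_def)
next
  case (Cons a L)
  obtain c m where a: "a = (c, m)" by force
  show ?case using Cons by (simp add: a tpoly_def poly_monom mnm_scale mult_ac)
qed

lemma coeff_tpoly: "coeff (tpoly L x) d = lval (hpart d L) x"
proof (induction L)
  case Nil then show ?case by (simp add: tpoly_def hpart_def)
next
  case (Cons a L)
  obtain c m where a: "a = (c, m)" by force
  show ?case using Cons by (simp add: a tpoly_def hpart_def coeff_monom)
qed

lemma poly_zero_nz:
  fixes p :: "complex poly"
  assumes "\<And>t. t \<noteq> 0 \<Longrightarrow> poly p t = 0"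
  shows "p = 0"
proof (rule ccontr)
  assume "p \<noteq> 0"
  then have "finite {t. poly p t = 0}" by (rule poly_roots_finite)
  moreover have "UNIV - {0} \<subseteq> {t. poly p t = 0}" using assms by auto
  ultimately have "finite (UNIV - {0::complex})" by (rule finite_subset[rotated])
  then show False using infinite_UNIV_char_0[where 'a=complex] by simp
qed

lemma tpoly_vanish:
  assumes "proj_closed N Z" "\<forall>y\<in>Z. lval L y = 0" "x \<in> Z"
  shows "tpoly L x = 0"
  by (rule poly_zero_nz) (use assms cone[OF assms(1) assms(3)] in \<open>auto simp: poly_tpoly\<close>)

lemma hpart_vanish:
  assumes "proj_closed N Z" "\<forall>y\<in>Z. lval L y = 0" "x \<in> Z"
  shows "lval (hpart d L) x = 0"
  using tpoly_vanish[OF assms] coeff_tpoly[of L x d] by simp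

lemma some_hpart_nz:
  assumes "lval L x \<noteq> 0"
  shows "\<exists>d. lval (hpart d L) x \<noteq> 0"
proof (rule ccontr)
  assume "\<not> ?thesis"
  then have "tpoly L x = 0" by (simp add: poly_eq_iff coeff_tpoly)
  then have "poly (tpoly L x) 1 = 0" by simp
  then show False using assms by (simp add: poly_tpoly)
qed

lemma domain_lval:
  assumes irr: "proj_irreducible N Z" and prod0: "\<forall>x\<in>Z. lval L1 x * lval L2 x = 0"
  shows "(\<forall>x\<in>Z. lval L1 x = 0) \<or> (\<forall>x\<in>Z. lval L2 x = 0)"
proof (rule ccontr)
  assume "\<not> ?thesis"
  then obtain x1 x2 where x1: "x1 \<in> Z" "lval L1 x1 \<noteq> 0" and x2: "x2 \<in> Z" "lval L2 x2 \<noteq> 0" by blast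
  obtain d where d: "lval (hpart d L1) x1 \<noteq> 0" using some_hpart_nz[OF x1(2)] by blast
  obtain e where e: "lval (hpart e L2) x2 \<noteq> 0" using some_hpart_nz[OF x2(2)] by blast
  have cl: "proj_closed N Z" using irr unfolding proj_irreducible_def by blast
  let ?A = "{x\<in>Z. lval (hpart d L1) x = 0}"
  let ?B = "{x\<in>Z. lval (hpart e L2) x = 0}"
  have A: "proj_closed N ?A" by (rule closed_inter_lval[OF cl hpart_deg])
  have B: "proj_closed N ?B" by (rule closed_inter_lval[OF cl hpart_deg])
  have "Z = ?A \<union> ?B"
  proof (intro equalityI subsetI)
    fix x assume x: "x \<in> Z"
    have "poly (tpoly L1 x * tpoly L2 x) t = 0" if "t \<noteq> 0" for t
      using prod0 cone[OF cl x that] by (simp add: poly_tpoly)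
    then have "tpoly L1 x * tpoly L2 x = 0" by (rule poly_zero_nz)
    then have "tpoly L1 x = 0 \<or> tpoly L2 x = 0" by simp
    then have "lval (hpart d L1) x = 0 \<or> lval (hpart e L2) x = 0"
      by (metis coeff_0 coeff_tpoly)
    then show "x \<in> ?A \<union> ?B" using x by blast
  qed auto
  then have "Z = ?A \<or> Z = ?B" using irr A B unfolding proj_irreducible_def by blast
  then show False using x1(1) x2(1) d e by blast
qed

lemma domain_PF:
  assumes "proj_irreducible N Z" "f \<in> PF S" "g \<in> PF T" "\<forall>x\<in>Z. f x * g x = 0"
  shows "(\<forall>x\<in>Z. f x = 0) \<or> (\<forall>x\<in>Z. g x = 0)"
proof -
  obtain L1 where "f = lval L1" using assms(2) by (rule PF_E)
  moreover obtain L2 where "g = lval L2" using assms(3) by (rule PF_E)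
  ultimately show ?thesis using domain_lval[OF assms(1)] assms(4) by blast
qed

lemma sum_fun_apply: "(\<Sum>i\<in>I. f i) x = (\<Sum>i\<in>I. f i x)"
  by (induction I rule: infinite_finite_induct) auto

lemma elim_lemma:
  fixes v :: "'i \<Rightarrow> 'j \<Rightarrow> 'r::comm_ring"
  assumes Aadd: "\<And>a b. a \<in> A \<Longrightarrow> b \<in> A \<Longrightarrow> a + b \<in> A"
    and Amult: "\<And>a b. a \<in> A \<Longrightarrow> b \<in> A \<Longrightarrow> a * b \<in> A"
    and Aneg: "\<And>a. a \<in> A \<Longrightarrow> - a \<in> A"
    and A0: "0 \<in> A"
    and dom: "\<And>a b. a \<in> A \<Longrightarrow> b \<in> A \<Longrightarrow> a * b = 0 \<Longrightarrow> a = 0 \<or> b = 0"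
    and u: "u \<in> A" "u \<noteq> 0"
  shows "finite J \<Longrightarrow> finite I \<Longrightarrow> card J < card I \<Longrightarrow> (\<forall>i\<in>I. \<forall>j\<in>J. v i j \<in> A) \<Longrightarrow>
    \<exists>e. (\<forall>i\<in>I. e i \<in> A) \<and> (\<exists>i\<in>I. e i \<noteq> 0) \<and> (\<forall>j\<in>J. (\<Sum>i\<in>I. e i * v i j) = 0)"
proof (induction J arbitrary: I v rule: finite_induct)
  case empty
  then have "I \<noteq> {}" by auto
  then obtain i0 where i0: "i0 \<in> I" by blast
  show ?case
    by (rule exI[of _ "\<lambda>i. if i = i0 then u else 0"]) (use i0 u A0 in auto)
next
  case (insert j J)
  have Asum: "sum f K \<in> A" if "\<And>k. k \<in> K \<Longrightarrow> f k \<in> A" for K :: "'i set" and f :: "'i \<Rightarrow> 'r"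
    using that
  proof (induction K rule: infinite_finite_induct)
    case (infinite K) then show ?case using A0 by simp
  next
    case empty then show ?case using A0 by simp
  next
    case (insert k K) then show ?case using Aadd by simp
  qed
  show ?case
  proof (cases "\<forall>i\<in>I. v i j = 0")
    case True
    have "card J < card I" using insert by simp
    then obtain e where e: "\<forall>i\<in>I. e i \<in> A" "\<exists>i\<in>I. e i \<noteq> 0" "\<forall>j\<in>J. (\<Sum>i\<in>I. e i * v i j) = 0"
      using insert.IH[of I v] insert.prems by blast
    show ?thesis
      by (rule exI[of _ e]) (use e True in auto)
  next
    case False
    then obtain i0 where i0: "i0 \<in> I" "v i0 j \<noteq> 0" by blast
    define c where "c = v i0 j"
    define I' where "I' = I - {i0}"
    define w where "w i j' = c * v i j' - v i j * v i0 j'" for i j'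
    have fI': "finite I'" using insert.prems unfolding I'_def by simp
    have cardI': "card J < card I'"
      using insert.prems insert.hyps i0(1) unfolding I'_def by (simp add: card_Diff_singleton)
    have cA: "c \<in> A" using insert.prems i0 unfolding c_def by blast
    have wA: "\<forall>i\<in>I'. \<forall>j'\<in>J. w i j' \<in> A"
    proof (intro ballI)
      fix i j' assume "i \<in> I'" "j' \<in> J"
      then have v: "v i j' \<in> A" "v i j \<in> A" "v i0 j' \<in> A" using insert.prems i0 unfolding I'_def by auto
      have "c * v i j' + - (v i j * v i0 j') \<in> A"
        by (rule Aadd[OF Amult[OF cA v(1)] Aneg[OF Amult[OF v(2,3)]]])
      then show "w i j' \<in> A" unfolding w_def by (simp only: diff_conv_add_uminus)
    qed
    obtain e' where e': "\<forall>i\<in>I'. e' i \<in> A" "\<exists>i\<in>I'. e' i \<noteq> 0" "\<forall>j'\<in>J. (\<Sum>i\<in>I'. e' i * w i j') = 0"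
      using insert.IH[OF fI' cardI' wA] by blast
    define e where "e i = (if i = i0 then - (\<Sum>k\<in>I'. e' k * v k j) else c * e' i)" for i
    have eA: "\<forall>i\<in>I. e i \<in> A"
    proof
      fix i assume i: "i \<in> I"
      show "e i \<in> A"
      proof (cases "i = i0")
        case True
        have "(\<Sum>k\<in>I'. e' k * v k j) \<in> A"
          by (rule Asum, rule Amult) (use e'(1) insert.prems in \<open>auto simp: I'_def\<close>)
        then have "- (\<Sum>k\<in>I'. e' k * v k j) \<in> A" by (rule Aneg)
        then show ?thesis using True unfolding e_def by simp
      next
        case False
        then have "i \<in> I'" using i unfolding I'_def by blast
        then have "c * e' i \<in> A" using e'(1) by (intro Amult[OF cA]) blast
        then show ?thesis using False unfolding e_def by simp
      qed
    qed
    have enz: "\<exists>i\<in>I. e i \<noteq> 0"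
    proof -
      obtain i where i: "i \<in> I'" "e' i \<noteq> 0" using e'(2) by blast
      have "c \<noteq> 0" using i0 unfolding c_def by simp
      then have "c * e' i \<noteq> 0" using dom[OF cA] e'(1) i by blast
      moreover have "i \<noteq> i0" "i \<in> I" using i unfolding I'_def by auto
      ultimately show ?thesis unfolding e_def by force
    qed
    have key: "(\<Sum>i\<in>I. e i * v i j') = (\<Sum>i\<in>I'. e' i * w i j')" for j'
    proof -
      have "(\<Sum>i\<in>I. e i * v i j') = e i0 * v i0 j' + (\<Sum>i\<in>I'. e i * v i j')"
        unfolding I'_def using insert.prems(1) i0(1) by (rule sum.remove)
      also have "(\<Sum>i\<in>I'. e i * v i j') = (\<Sum>i\<in>I'. c * e' i * v i j')"
        by (rule sum.cong) (auto simp: e_def I'_def)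
      also have "e i0 * v i0 j' = - (\<Sum>k\<in>I'. e' k * v k j) * v i0 j'"
        by (simp add: e_def)
      also have "- (\<Sum>k\<in>I'. e' k * v k j) * v i0 j' + (\<Sum>i\<in>I'. c * e' i * v i j')
          = (\<Sum>i\<in>I'. e' i * w i j')"
      proof -
        have "(\<Sum>i\<in>I'. e' i * w i j') = (\<Sum>i\<in>I'. c * e' i * v i j' - (e' i * v i j) * v i0 j')"
          by (rule sum.cong) (simp_all add: w_def right_diff_distrib mult_ac)
        also have "\<dots> = (\<Sum>i\<in>I'. c * e' i * v i j') - (\<Sum>i\<in>I'. e' i * v i j) * v i0 j'"
          by (simp add: sum_subtractf sum_distrib_right)
        finally show ?thesis by simp
      qed
      finally show ?thesis .
    qed
    have "\<forall>j'\<in>insert j J. (\<Sum>i\<in>I. e i * v i j') = 0"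
    proof
      fix j' assume "j' \<in> insert j J"
      then show "(\<Sum>i\<in>I. e i * v i j') = 0"
      proof
        assume "j' = j"
        have "w i j = 0" for i unfolding w_def c_def by (simp add: mult.commute)
        then show ?thesis unfolding key \<open>j' = j\<close> by simp
      next
        assume "j' \<in> J"
        then show ?thesis unfolding key using e'(3) by blast
      qed
    qed
    then show ?thesis using eA enz by blast
  qed
qed

definition indep :: "('v \<Rightarrow> complex) set \<Rightarrow> 'v set \<Rightarrow> bool" where
  "indep Z S \<longleftrightarrow> (\<forall>F\<in>PF S. (\<forall>x\<in>Z. F x = 0) \<longrightarrow> (\<forall>x. F x = 0))"

definition alg :: "('v \<Rightarrow> complex) set \<Rightarrow> 'v set \<Rightarrow> (('v \<Rightarrow> complex) \<Rightarrow> complex) \<Rightarrow> bool" where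
  "alg Z S f \<longleftrightarrow> (\<exists>k a. (\<forall>i\<le>k. a i \<in> PF S) \<and> (\<exists>i\<le>k. \<exists>x\<in>Z. a i x \<noteq> 0) \<and>
      (\<forall>x\<in>Z. (\<Sum>i\<le>k. a i x * f x ^ i) = 0))"

lemma alg_count:
  assumes irr: "proj_irreducible N Z"
    and c: "c \<in> PF S" "\<exists>x\<in>Z. c x \<noteq> 0"
    and B: "finite B"
    and rep: "\<forall>m. \<exists>\<gamma>. (\<forall>b. \<gamma> b \<in> PF S) \<and> (\<forall>x\<in>Z. c x ^ m * g x ^ m = (\<Sum>b\<in>B. \<gamma> b x * \<beta> b x))"
  shows "alg Z S g"
proof -
  obtain \<Gamma> where \<Gamma>: "\<forall>m. (\<forall>b. \<Gamma> m b \<in> PF S) \<and> (\<forall>x\<in>Z. c x ^ m * g x ^ m = (\<Sum>b\<in>B. \<Gamma> m b x * \<beta> b x))"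
    using choice[OF rep] by blast
  define \<rho> where "\<rho> F = (\<lambda>x. if x \<in> Z then F x else 0)" for F :: "('a \<Rightarrow> complex) \<Rightarrow> complex"
  define A where "A = \<rho> ` PF S"
  define K where "K = card B"
  have Zne: "Z \<noteq> {}" using irr unfolding proj_irreducible_def by blast
  have \<rho>add: "\<rho> F + \<rho> G = \<rho> (\<lambda>x. F x + G x)" for F G by (auto simp: \<rho>_def fun_eq_iff)
  have \<rho>mult: "\<rho> F * \<rho> G = \<rho> (\<lambda>x. F x * G x)" for F G by (auto simp: \<rho>_def fun_eq_iff)
  have \<rho>neg: "- \<rho> F = \<rho> (\<lambda>x. - F x)" for F by (auto simp: \<rho>_def fun_eq_iff)
  have \<rho>0: "\<rho> F = 0 \<longleftrightarrow> (\<forall>x\<in>Z. F x = 0)" for F by (auto simp: \<rho>_def fun_eq_iff)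
  have el: "\<exists>e. (\<forall>i\<in>{..K}. e i \<in> A) \<and> (\<exists>i\<in>{..K}. e i \<noteq> 0) \<and>
      (\<forall>j\<in>B. (\<Sum>i\<in>{..K}. e i * \<rho> (\<Gamma> i j)) = 0)"
  proof (rule elim_lemma[where u = "\<rho> (\<lambda>x. 1)"])
    show "a + b \<in> A" if ab: "a \<in> A" "b \<in> A" for a b
    proof -
      obtain F G where FG: "F \<in> PF S" "G \<in> PF S" "a = \<rho> F" "b = \<rho> G" using ab unfolding A_def by blast
      show ?thesis unfolding FG(3,4) \<rho>add A_def by (rule imageI) (rule PF_add[OF FG(1,2)])
    qed
    show "a * b \<in> A" if ab: "a \<in> A" "b \<in> A" for a b
    proof -
      obtain F G where FG: "F \<in> PF S" "G \<in> PF S" "a = \<rho> F" "b = \<rho> G" using ab unfolding A_def by blast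
      show ?thesis unfolding FG(3,4) \<rho>mult A_def by (rule imageI) (rule PF_mult[OF FG(1,2)])
    qed
    show "- a \<in> A" if ab: "a \<in> A" for a
    proof -
      obtain F where FG: "F \<in> PF S" "a = \<rho> F" using ab unfolding A_def by blast
      show ?thesis unfolding FG(2) \<rho>neg A_def by (rule imageI) (rule PF_neg[OF FG(1)])
    qed
    have "0 = \<rho> (\<lambda>x. 0)" by (simp add: \<rho>_def fun_eq_iff)
    then show "0 \<in> A" using PF_const unfolding A_def by blast
    show "a = 0 \<or> b = 0" if ab: "a \<in> A" "b \<in> A" "a * b = 0" for a b
    proof -
      obtain F G where FG: "F \<in> PF S" "G \<in> PF S" "a = \<rho> F" "b = \<rho> G" using ab(1,2) unfolding A_def by blast
      then have "\<forall>x\<in>Z. F x * G x = 0" using ab(3) by (simp add: \<rho>mult \<rho>0)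
      then show ?thesis using domain_PF[OF irr FG(1,2)] FG(3,4) by (simp add: \<rho>0)
    qed
    show "\<rho> (\<lambda>x. 1) \<in> A" using PF_const unfolding A_def by blast
    show "\<rho> (\<lambda>x. 1) \<noteq> 0" using Zne by (simp add: \<rho>0)
    show "finite B" by (rule B)
    show "finite {..K}" by simp
    show "card B < card {..K}" by (simp add: K_def)
    show "\<forall>i\<in>{..K}. \<forall>j\<in>B. \<rho> (\<Gamma> i j) \<in> A" using \<Gamma> unfolding A_def by blast
  qed
  then obtain e where e: "\<forall>i\<in>{..K}. e i \<in> A" "\<exists>i\<in>{..K}. e i \<noteq> 0"
      "\<forall>j\<in>B. (\<Sum>i\<in>{..K}. e i * \<rho> (\<Gamma> i j)) = 0" by blast
  have "\<forall>i\<in>{..K}. \<exists>F. F \<in> PF S \<and> e i = \<rho> F" using e(1) unfolding A_def by blast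
  from bchoice[OF this] obtain \<epsilon> where \<epsilon>: "\<forall>i\<in>{..K}. \<epsilon> i \<in> PF S \<and> e i = \<rho> (\<epsilon> i)" by blast
  define a where "a i = (\<lambda>x. \<epsilon> i x * c x ^ i)" for i
  have P1: "\<forall>i\<le>K. a i \<in> PF S"
    proof (intro allI impI)
      fix i assume "i \<le> K"
      then have "\<epsilon> i \<in> PF S" using \<epsilon> by auto
      then show "a i \<in> PF S" unfolding a_def by (rule PF_mult[OF _ PF_power[OF c(1)]])
    qed
    obtain i where i: "i \<le> K" "e i \<noteq> 0" using e(2) by auto
    then have "\<not> (\<forall>x\<in>Z. \<epsilon> i x = 0)" using \<epsilon> \<rho>0 by auto
    moreover have "\<not> (\<forall>x\<in>Z. c x ^ i = 0)" using c(2) by auto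
    moreover have "\<epsilon> i \<in> PF S" using \<epsilon> i(1) by auto
    ultimately have "\<not> (\<forall>x\<in>Z. \<epsilon> i x * c x ^ i = 0)"
      using domain_PF[OF irr _ PF_power[OF c(1)], of "\<epsilon> i" S i] by blast
    then have P2: "\<exists>i\<le>K. \<exists>x\<in>Z. a i x \<noteq> 0" using i(1) unfolding a_def by auto
    have P3: "\<forall>x\<in>Z. (\<Sum>i\<le>K. a i x * g x ^ i) = 0"
    proof
      fix x assume x: "x \<in> Z"
      have "(\<Sum>i\<le>K. a i x * g x ^ i) = (\<Sum>i\<le>K. \<epsilon> i x * (c x ^ i * g x ^ i))"
        unfolding a_def by (simp add: mult_ac)
      also have "\<dots> = (\<Sum>i\<le>K. \<epsilon> i x * (\<Sum>b\<in>B. \<Gamma> i b x * \<beta> b x))"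
        using \<Gamma> x by simp
      also have "\<dots> = (\<Sum>b\<in>B. (\<Sum>i\<le>K. \<epsilon> i x * \<Gamma> i b x) * \<beta> b x)"
        by (simp add: sum_distrib_left sum_distrib_right mult_ac sum.swap[of _ B])
      also have "\<dots> = 0"
      proof (rule sum.neutral, rule ballI)
        fix b assume b: "b \<in> B"
        have "(\<Sum>i\<in>{..K}. e i * \<rho> (\<Gamma> i b)) x = 0" using e(3) b by simp
        then have "(\<Sum>i\<le>K. \<epsilon> i x * \<Gamma> i b x) = 0"
          using \<epsilon> x by (simp add: sum_fun_apply \<rho>_def)
        then show "(\<Sum>i\<le>K. \<epsilon> i x * \<Gamma> i b x) * \<beta> b x = 0" by simp
      qed
      finally show "(\<Sum>i\<le>K. a i x * g x ^ i) = 0" .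
    qed
  show ?thesis unfolding alg_def using P1 P2 P3 by blast
qed

lemma alg_reduce:
  assumes a: "\<forall>i\<le>Suc q. a i \<in> PF S" and rel: "\<forall>x\<in>Z. (\<Sum>i\<le>Suc q. a i x * g x ^ i) = 0"
  shows "\<exists>\<gamma>. (\<forall>i. \<gamma> i \<in> PF S) \<and> (\<forall>x\<in>Z. a (Suc q) x ^ m * g x ^ m = (\<Sum>i<Suc q. \<gamma> i x * g x ^ i))"
proof (induction m)
  case 0
  define \<gamma> where "\<gamma> i = (if i = 0 then (\<lambda>x::'a \<Rightarrow> complex. 1::complex) else (\<lambda>x. 0))" for i :: nat
  have "\<forall>i. \<gamma> i \<in> PF S" unfolding \<gamma>_def using PF_const[of 1 S] PF_const[of 0 S] by simp
  moreover have "\<forall>x\<in>Z. a (Suc q) x ^ 0 * g x ^ 0 = (\<Sum>i<Suc q. \<gamma> i x * g x ^ i)"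
    by (simp add: sum.lessThan_Suc_shift \<gamma>_def del: sum.lessThan_Suc)
  ultimately show ?case by blast
next
  case (Suc m)
  then obtain \<gamma> where \<gamma>: "\<forall>i. \<gamma> i \<in> PF S" "\<forall>x\<in>Z. a (Suc q) x ^ m * g x ^ m = (\<Sum>i<Suc q. \<gamma> i x * g x ^ i)"
    by blast
  define \<gamma>' where "\<gamma>' i = (if i \<le> q then (\<lambda>x. (if i = 0 then 0 else a (Suc q) x * \<gamma> (i - 1) x) - \<gamma> q x * a i x) else (\<lambda>x. 0))" for i :: nat
  have P: "\<forall>i. \<gamma>' i \<in> PF S"
  proof
    fix i
    show "\<gamma>' i \<in> PF S"
    proof (cases "i \<le> q")
      case True
      have ai: "a i \<in> PF S" "a (Suc q) \<in> PF S" using a True by auto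
      have 1: "(\<lambda>x. (if i = 0 then 0 else a (Suc q) x * \<gamma> (i - 1) x)) \<in> PF S"
      proof (cases "i = 0")
        case True then show ?thesis using PF_const[of 0 S] by simp
      next
        case False then show ?thesis using PF_mult[OF ai(2) \<gamma>(1)[rule_format, of "i - 1"]] by simp
      qed
      have 2: "(\<lambda>x. \<gamma> q x * a i x) \<in> PF S" by (rule PF_mult[OF \<gamma>(1)[rule_format] ai(1)])
      show ?thesis using PF_diff[OF 1 2] True unfolding \<gamma>'_def by simp
    next
      case False then show ?thesis unfolding \<gamma>'_def using PF_const[of 0 S] by simp
    qed
  qed
  have E: "a (Suc q) x ^ Suc m * g x ^ Suc m = (\<Sum>i<Suc q. \<gamma>' i x * g x ^ i)" if x: "x \<in> Z" for x
  proof -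
    define ap where "ap = a (Suc q) x"
    define G where "G = g x"
    have r: "(\<Sum>i<Suc q. a i x * G ^ i) + ap * G ^ Suc q = 0"
      using rel x unfolding ap_def G_def by (simp add: lessThan_Suc_atMost[symmetric])
    have "a (Suc q) x ^ Suc m * g x ^ Suc m = ap * G * (ap ^ m * G ^ m)"
      unfolding ap_def G_def by (simp add: mult_ac)
    also have "\<dots> = ap * G * (\<Sum>i<Suc q. \<gamma> i x * G ^ i)"
      using \<gamma>(2) x unfolding ap_def G_def by simp
    also have "\<dots> = (\<Sum>i<Suc q. ap * \<gamma> i x * G ^ Suc i)"
      unfolding sum_distrib_left by (rule sum.cong) (simp_all add: mult_ac)
    also have "\<dots> = (\<Sum>i<q. ap * \<gamma> i x * G ^ Suc i) + \<gamma> q x * (ap * G ^ Suc q)"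
      by (simp add: mult_ac)
    also have "ap * G ^ Suc q = - (\<Sum>i<Suc q. a i x * G ^ i)"
      using r by (metis add.commute eq_neg_iff_add_eq_0)
    also have "(\<Sum>i<q. ap * \<gamma> i x * G ^ Suc i) + \<gamma> q x * - (\<Sum>i<Suc q. a i x * G ^ i)
        = (\<Sum>i<Suc q. (if i = 0 then 0 else ap * \<gamma> (i - 1) x) * G ^ i) - (\<Sum>i<Suc q. \<gamma> q x * a i x * G ^ i)"
      by (simp add: sum.lessThan_Suc_shift sum_distrib_left mult_ac right_diff_distrib del: sum.lessThan_Suc)
    also have "\<dots> = (\<Sum>i<Suc q. \<gamma>' i x * G ^ i)"
      unfolding sum_subtractf[symmetric] by (rule sum.cong) (auto simp: \<gamma>'_def ap_def left_diff_distrib)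
    finally show ?thesis unfolding G_def .
  qed
  show ?case using P E by blast
qed

lemma alg_lead:
  assumes "alg Z S g"
  shows "\<exists>q a. (\<forall>i\<le>Suc q. a i \<in> PF S) \<and> (\<exists>x\<in>Z. a (Suc q) x \<noteq> 0) \<and> (\<forall>x\<in>Z. (\<Sum>i\<le>Suc q. a i x * g x ^ i) = 0)"
proof -
  obtain k a where ka: "\<forall>i\<le>k. a i \<in> PF S" "\<exists>i\<le>k. \<exists>x\<in>Z. a i x \<noteq> 0" "\<forall>x\<in>Z. (\<Sum>i\<le>k. a i x * g x ^ i) = 0"
    using assms unfolding alg_def by blast
  define P where "P = {i. i \<le> k \<and> (\<exists>x\<in>Z. a i x \<noteq> 0)}"
  have fP: "finite P" unfolding P_def by simp
  have neP: "P \<noteq> {}" using ka(2) unfolding P_def by blast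
  define p where "p = Max P"
  have pP: "p \<in> P" unfolding p_def using fP neP by (rule Max_in)
  have pmax: "i \<in> P \<Longrightarrow> i \<le> p" for i unfolding p_def using fP by simp
  have pk: "p \<le> k" using pP unfolding P_def by blast
  have rel: "\<forall>x\<in>Z. (\<Sum>i\<le>p. a i x * g x ^ i) = 0"
  proof
    fix x assume x: "x \<in> Z"
    have "(\<Sum>i\<le>k. a i x * g x ^ i) = (\<Sum>i\<le>p. a i x * g x ^ i)"
    proof (rule sum.mono_neutral_right)
      show "finite {..k}" by simp
      show "{..p} \<subseteq> {..k}" using pk by auto
      show "\<forall>i\<in>{..k} - {..p}. a i x * g x ^ i = 0"
      proof
        fix i assume i: "i \<in> {..k} - {..p}"
        then have "i \<notin> P" using pmax by fastforce
        then have "a i x = 0" using i x unfolding P_def by auto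
        then show "a i x * g x ^ i = 0" by simp
      qed
    qed
    then show "(\<Sum>i\<le>p. a i x * g x ^ i) = 0" using ka(3) x by simp
  qed
  have "p \<noteq> 0"
  proof
    assume p0: "p = 0"
    then have "\<forall>x\<in>Z. a 0 x = 0" using rel by simp
    moreover have "\<exists>x\<in>Z. a 0 x \<noteq> 0" using pP p0 unfolding P_def by blast
    ultimately show False by blast
  qed
  then obtain q where q: "p = Suc q" using not0_implies_Suc by blast
  have "\<forall>i\<le>Suc q. a i \<in> PF S" using ka(1) pk q by auto
  moreover have "\<exists>x\<in>Z. a (Suc q) x \<noteq> 0" using pP q unfolding P_def by blast
  ultimately show ?thesis using rel q by blast
qed

lemma alg_mult:
  assumes irr: "proj_irreducible N Z" and g: "alg Z S g" and h: "alg Z S h"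
  shows "alg Z S (\<lambda>x. g x * h x)"
proof -
  obtain q a where a: "\<forall>i\<le>Suc q. a i \<in> PF S" "\<exists>x\<in>Z. a (Suc q) x \<noteq> 0" "\<forall>x\<in>Z. (\<Sum>i\<le>Suc q. a i x * g x ^ i) = 0"
    using alg_lead[OF g] by blast
  obtain r b where b: "\<forall>i\<le>Suc r. b i \<in> PF S" "\<exists>x\<in>Z. b (Suc r) x \<noteq> 0" "\<forall>x\<in>Z. (\<Sum>i\<le>Suc r. b i x * h x ^ i) = 0"
    using alg_lead[OF h] by blast
  have Rg: "\<forall>m. \<exists>\<gamma>. (\<forall>i. \<gamma> i \<in> PF S) \<and> (\<forall>x\<in>Z. a (Suc q) x ^ m * g x ^ m = (\<Sum>i<Suc q. \<gamma> i x * g x ^ i))"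
    using alg_reduce[OF a(1) a(3)] by blast
  have Rh: "\<forall>m. \<exists>\<gamma>. (\<forall>i. \<gamma> i \<in> PF S) \<and> (\<forall>x\<in>Z. b (Suc r) x ^ m * h x ^ m = (\<Sum>i<Suc r. \<gamma> i x * h x ^ i))"
    using alg_reduce[OF b(1) b(3)] by blast
  define c where "c = (\<lambda>x. a (Suc q) x * b (Suc r) x)"
  have aP: "a (Suc q) \<in> PF S" and bP: "b (Suc r) \<in> PF S" using a(1) b(1) by auto
  have cP: "c \<in> PF S" unfolding c_def by (rule PF_mult[OF aP bP])
  have cnz: "\<exists>x\<in>Z. c x \<noteq> 0"
    using domain_PF[OF irr aP bP] a(2) b(2) unfolding c_def by blast
  define B where "B = {..<Suc q} \<times> {..<Suc r}"
  define \<beta> where "\<beta> = (\<lambda>(i::nat, j::nat) x. g x ^ i * h x ^ j)"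
  show ?thesis
  proof (rule alg_count[OF irr cP cnz, of B _ \<beta>])
    show "finite B" unfolding B_def by simp
    show "\<forall>m. \<exists>\<gamma>. (\<forall>b. \<gamma> b \<in> PF S) \<and> (\<forall>x\<in>Z. c x ^ m * (g x * h x) ^ m = (\<Sum>b\<in>B. \<gamma> b x * \<beta> b x))"
    proof
      fix m
      obtain \<gamma>1 where \<gamma>1: "\<forall>i. \<gamma>1 i \<in> PF S" "\<forall>x\<in>Z. a (Suc q) x ^ m * g x ^ m = (\<Sum>i<Suc q. \<gamma>1 i x * g x ^ i)"
        using Rg by blast
      obtain \<gamma>2 where \<gamma>2: "\<forall>i. \<gamma>2 i \<in> PF S" "\<forall>x\<in>Z. b (Suc r) x ^ m * h x ^ m = (\<Sum>i<Suc r. \<gamma>2 i x * h x ^ i)"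
        using Rh by blast
      define \<gamma> where "\<gamma> = (\<lambda>(i::nat, j::nat) x. \<gamma>1 i x * \<gamma>2 j x)"
      have "\<forall>b. \<gamma> b \<in> PF S"
      proof
        fix bb :: "nat \<times> nat"
        obtain i j where "bb = (i, j)" by force
        then show "\<gamma> bb \<in> PF S" unfolding \<gamma>_def using PF_mult[OF \<gamma>1(1)[rule_format] \<gamma>2(1)[rule_format]] by simp
      qed
      moreover have "\<forall>x\<in>Z. c x ^ m * (g x * h x) ^ m = (\<Sum>b\<in>B. \<gamma> b x * \<beta> b x)"
      proof
        fix x assume x: "x \<in> Z"
        have "c x ^ m * (g x * h x) ^ m = (a (Suc q) x ^ m * g x ^ m) * (b (Suc r) x ^ m * h x ^ m)"
          unfolding c_def by (simp add: power_mult_distrib mult_ac)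
        also have "\<dots> = (\<Sum>i<Suc q. \<gamma>1 i x * g x ^ i) * (\<Sum>j<Suc r. \<gamma>2 j x * h x ^ j)"
          using \<gamma>1(2) \<gamma>2(2) x by simp
        also have "\<dots> = (\<Sum>i<Suc q. \<Sum>j<Suc r. (\<gamma>1 i x * g x ^ i) * (\<gamma>2 j x * h x ^ j))"
          by (rule sum_product)
        also have "\<dots> = (\<Sum>(i, j)\<in>B. (\<gamma>1 i x * g x ^ i) * (\<gamma>2 j x * h x ^ j))"
          unfolding B_def by (rule sum.cartesian_product)
        also have "\<dots> = (\<Sum>b\<in>B. \<gamma> b x * \<beta> b x)"
          by (rule sum.cong) (auto simp: \<gamma>_def \<beta>_def mult_ac)
        finally show "c x ^ m * (g x * h x) ^ m = (\<Sum>b\<in>B. \<gamma> b x * \<beta> b x)" .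
      qed
      ultimately show "\<exists>\<gamma>. (\<forall>b. \<gamma> b \<in> PF S) \<and> (\<forall>x\<in>Z. c x ^ m * (g x * h x) ^ m = (\<Sum>b\<in>B. \<gamma> b x * \<beta> b x))"
        by blast
    qed
  qed
qed

lemma alg_add:
  assumes irr: "proj_irreducible N Z" and g: "alg Z S g" and h: "alg Z S h"
  shows "alg Z S (\<lambda>x. g x + h x)"
proof -
  obtain q a where a: "\<forall>i\<le>Suc q. a i \<in> PF S" "\<exists>x\<in>Z. a (Suc q) x \<noteq> 0" "\<forall>x\<in>Z. (\<Sum>i\<le>Suc q. a i x * g x ^ i) = 0"
    using alg_lead[OF g] by blast
  obtain r b where b: "\<forall>i\<le>Suc r. b i \<in> PF S" "\<exists>x\<in>Z. b (Suc r) x \<noteq> 0" "\<forall>x\<in>Z. (\<Sum>i\<le>Suc r. b i x * h x ^ i) = 0"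
    using alg_lead[OF h] by blast
  have "\<forall>m. \<exists>\<gamma>. (\<forall>i. \<gamma> i \<in> PF S) \<and> (\<forall>x\<in>Z. a (Suc q) x ^ m * g x ^ m = (\<Sum>i<Suc q. \<gamma> i x * g x ^ i))"
    using alg_reduce[OF a(1) a(3)] by blast
  from choice[OF this] obtain G where G: "\<forall>m. (\<forall>i. G m i \<in> PF S) \<and> (\<forall>x\<in>Z. a (Suc q) x ^ m * g x ^ m = (\<Sum>i<Suc q. G m i x * g x ^ i))"
    by blast
  have "\<forall>m. \<exists>\<gamma>. (\<forall>i. \<gamma> i \<in> PF S) \<and> (\<forall>x\<in>Z. b (Suc r) x ^ m * h x ^ m = (\<Sum>i<Suc r. \<gamma> i x * h x ^ i))"
    using alg_reduce[OF b(1) b(3)] by blast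
  from choice[OF this] obtain H where H: "\<forall>m. (\<forall>i. H m i \<in> PF S) \<and> (\<forall>x\<in>Z. b (Suc r) x ^ m * h x ^ m = (\<Sum>i<Suc r. H m i x * h x ^ i))"
    by blast
  define ap where "ap = a (Suc q)"
  define bq where "bq = b (Suc r)"
  define c where "c = (\<lambda>x. ap x * bq x)"
  have aP: "ap \<in> PF S" and bP: "bq \<in> PF S" using a(1) b(1) unfolding ap_def bq_def by auto
  have cP: "c \<in> PF S" unfolding c_def by (rule PF_mult[OF aP bP])
  have cnz: "\<exists>x\<in>Z. c x \<noteq> 0"
    using domain_PF[OF irr aP bP] a(2) b(2) unfolding c_def ap_def bq_def by blast
  define B where "B = {..<Suc q} \<times> {..<Suc r}"
  define \<beta> where "\<beta> = (\<lambda>(i::nat, j::nat) x. g x ^ i * h x ^ j)"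
  show ?thesis
  proof (rule alg_count[OF irr cP cnz, of B _ \<beta>])
    show "finite B" unfolding B_def by simp
    show "\<forall>m. \<exists>\<gamma>. (\<forall>b. \<gamma> b \<in> PF S) \<and> (\<forall>x\<in>Z. c x ^ m * (g x + h x) ^ m = (\<Sum>b\<in>B. \<gamma> b x * \<beta> b x))"
    proof
      fix m
      define \<gamma> where "\<gamma> = (\<lambda>(i'::nat, j'::nat) x. \<Sum>i\<le>m. of_nat (m choose i) * ap x ^ (m - i) * bq x ^ i * G i i' x * H (m - i) j' x)"
      have "\<forall>b. \<gamma> b \<in> PF S"
      proof
        fix bb :: "nat \<times> nat"
        obtain i' j' where bb: "bb = (i', j')" by force
        have "(\<lambda>x. of_nat (m choose i) * ap x ^ (m - i) * bq x ^ i * G i i' x * H (m - i) j' x) \<in> PF S" for i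
          by (intro PF_mult PF_power PF_const aP bP G[rule_format, THEN conjunct1, rule_format] H[rule_format, THEN conjunct1, rule_format])
        then have "(\<lambda>x. \<Sum>i\<le>m. of_nat (m choose i) * ap x ^ (m - i) * bq x ^ i * G i i' x * H (m - i) j' x) \<in> PF S"
          by (intro PF_sum) auto
        then show "\<gamma> bb \<in> PF S" unfolding \<gamma>_def bb by simp
      qed
      moreover have "\<forall>x\<in>Z. c x ^ m * (g x + h x) ^ m = (\<Sum>b\<in>B. \<gamma> b x * \<beta> b x)"
      proof
        fix x assume x: "x \<in> Z"
        have Gx: "ap x ^ i * g x ^ i = (\<Sum>i'<Suc q. G i i' x * g x ^ i')" for i
          using G x unfolding ap_def by blast
        have Hx: "bq x ^ j * h x ^ j = (\<Sum>j'<Suc r. H j j' x * h x ^ j')" for j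
          using H x unfolding bq_def by blast
        have "c x ^ m * (g x + h x) ^ m = (\<Sum>i\<le>m. c x ^ m * (of_nat (m choose i) * g x ^ i * h x ^ (m - i)))"
          by (simp add: binomial_ring sum_distrib_left)
        also have "\<dots> = (\<Sum>i\<le>m. of_nat (m choose i) * ap x ^ (m - i) * bq x ^ i *
              ((ap x ^ i * g x ^ i) * (bq x ^ (m - i) * h x ^ (m - i))))"
        proof (rule sum.cong)
          fix i assume "i \<in> {..m}"
          then have im: "i \<le> m" by simp
          have "c x ^ m = (ap x ^ (m - i) * ap x ^ i) * (bq x ^ i * bq x ^ (m - i))"
            unfolding c_def power_mult_distrib power_add[symmetric] using im by simp
          then show "c x ^ m * (of_nat (m choose i) * g x ^ i * h x ^ (m - i)) =
            of_nat (m choose i) * ap x ^ (m - i) * bq x ^ i * ((ap x ^ i * g x ^ i) * (bq x ^ (m - i) * h x ^ (m - i)))"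
            by (simp add: mult_ac)
        qed simp
        also have "\<dots> = (\<Sum>i\<le>m. of_nat (m choose i) * ap x ^ (m - i) * bq x ^ i *
              ((\<Sum>i'<Suc q. G i i' x * g x ^ i') * (\<Sum>j'<Suc r. H (m - i) j' x * h x ^ j')))"
          unfolding Gx Hx ..
        also have "\<dots> = (\<Sum>i\<le>m. \<Sum>(i', j')\<in>B. (of_nat (m choose i) * ap x ^ (m - i) * bq x ^ i * G i i' x * H (m - i) j' x) * (g x ^ i' * h x ^ j'))"
        proof (rule sum.cong)
          fix i assume "i \<in> {..m}"
          have "(\<Sum>i'<Suc q. G i i' x * g x ^ i') * (\<Sum>j'<Suc r. H (m - i) j' x * h x ^ j')
              = (\<Sum>i'<Suc q. \<Sum>j'<Suc r. (G i i' x * g x ^ i') * (H (m - i) j' x * h x ^ j'))"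
            by (rule sum_product)
          also have "\<dots> = (\<Sum>(i', j')\<in>B. (G i i' x * g x ^ i') * (H (m - i) j' x * h x ^ j'))"
            unfolding B_def by (rule sum.cartesian_product)
          finally show "of_nat (m choose i) * ap x ^ (m - i) * bq x ^ i *
              ((\<Sum>i'<Suc q. G i i' x * g x ^ i') * (\<Sum>j'<Suc r. H (m - i) j' x * h x ^ j'))
            = (\<Sum>(i', j')\<in>B. (of_nat (m choose i) * ap x ^ (m - i) * bq x ^ i * G i i' x * H (m - i) j' x) * (g x ^ i' * h x ^ j'))"
            by (simp add: sum_distrib_left case_prod_beta mult_ac)
        qed simp
        also have "\<dots> = (\<Sum>b\<in>B. \<Sum>i\<le>m. (case b of (i', j') \<Rightarrow> (of_nat (m choose i) * ap x ^ (m - i) * bq x ^ i * G i i' x * H (m - i) j' x) * (g x ^ i' * h x ^ j')))"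
          by (rule sum.swap)
        also have "\<dots> = (\<Sum>b\<in>B. \<gamma> b x * \<beta> b x)"
          by (rule sum.cong) (auto simp: \<gamma>_def \<beta>_def sum_distrib_right)
        finally show "c x ^ m * (g x + h x) ^ m = (\<Sum>b\<in>B. \<gamma> b x * \<beta> b x)" .
      qed
      ultimately show "\<exists>\<gamma>. (\<forall>b. \<gamma> b \<in> PF S) \<and> (\<forall>x\<in>Z. c x ^ m * (g x + h x) ^ m = (\<Sum>b\<in>B. \<gamma> b x * \<beta> b x))"
        by blast
    qed
  qed
qed

lemma alg_cong:
  assumes "alg Z S f" "\<And>x. x \<in> Z \<Longrightarrow> f x = g x" shows "alg Z S g"
proof -
  obtain k a where ka: "\<forall>i\<le>k. a i \<in> PF S" "\<exists>i\<le>k. \<exists>x\<in>Z. a i x \<noteq> 0" "\<forall>x\<in>Z. (\<Sum>i\<le>k. a i x * f x ^ i) = 0"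
    using assms(1) unfolding alg_def by blast
  have "\<forall>x\<in>Z. (\<Sum>i\<le>k. a i x * g x ^ i) = 0" using ka(3) assms(2) by simp
  then show ?thesis unfolding alg_def using ka(1,2) by blast
qed

lemma alg_lin:
  assumes "Z \<noteq> {}" "F \<in> PF S"
  shows "alg Z S (\<lambda>x. F x)"
proof -
  define a where "a i = (if i = 0 then F else (\<lambda>x. -1))" for i :: nat
  have "\<forall>i\<le>1. a i \<in> PF S" using assms(2) PF_const[of "-1" S] unfolding a_def by auto
  moreover have "\<exists>i\<le>1. \<exists>x\<in>Z. a i x \<noteq> 0" using assms(1) unfolding a_def by force
  moreover have "\<forall>x\<in>Z. (\<Sum>i\<le>1. a i x * F x ^ i) = 0" unfolding a_def by simp
  ultimately show ?thesis unfolding alg_def by blast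
qed

lemma alg_prod:
  assumes irr: "proj_irreducible N Z"
  shows "finite V \<Longrightarrow> (\<And>v. v \<in> V \<Longrightarrow> alg Z S (f v)) \<Longrightarrow> alg Z S (\<lambda>x. \<Prod>v\<in>V. f v x)"
proof (induction V rule: finite_induct)
  case empty
  have "Z \<noteq> {}" using irr unfolding proj_irreducible_def by blast
  then show ?case using alg_lin[OF _ PF_const[of 1 S]] by simp
next
  case (insert v V)
  have "alg Z S (\<lambda>x. f v x * (\<Prod>v\<in>V. f v x))"
    by (rule alg_mult[OF irr]) (use insert in auto)
  then show ?case using insert by simp
qed

lemma alg_power:
  assumes irr: "proj_irreducible N Z" and f: "alg Z S f"
  shows "alg Z S (\<lambda>x. f x ^ k)"
proof (induction k)
  case 0
  have "Z \<noteq> {}" using irr unfolding proj_irreducible_def by blast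
  then show ?case using alg_lin[OF _ PF_const[of 1 S]] by simp
next
  case (Suc k)
  have "alg Z S (\<lambda>x. f x * f x ^ k)" by (rule alg_mult[OF irr f Suc])
  then show ?case by simp
qed

lemma alg_lval:
  assumes irr: "proj_irreducible N Z" and vars: "\<And>j. alg Z S (\<lambda>x. x j)"
  shows "alg Z S (lval L)"
proof (induction L)
  case Nil
  have "Z \<noteq> {}" using irr unfolding proj_irreducible_def by blast
  then have "alg Z S (\<lambda>x. 0)" using alg_lin[OF _ PF_const[of 0 S]] by simp
  then show ?case by (rule alg_cong) simp
next
  case (Cons p L)
  obtain c m where p: "p = (c, m)" by force
  have Zne: "Z \<noteq> {}" using irr unfolding proj_irreducible_def by blast
  have "alg Z S (\<lambda>x. \<Prod>v\<in>Poly_Mapping.keys m. x v ^ Poly_Mapping.lookup m v)"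
    by (rule alg_prod[OF irr]) (auto intro: alg_power[OF irr vars])
  then have "alg Z S (\<lambda>x. c * mnm m x)"
    by (intro alg_mult[OF irr alg_lin[OF Zne PF_const]]) (simp add: mnm_def)
  then have "alg Z S (\<lambda>x. c * mnm m x + lval L x)"
    by (intro alg_add[OF irr]) (use Cons in auto)
  then show ?case by (rule alg_cong) (simp add: p)
qed

lemma indep_mono: "Z \<subseteq> Z' \<Longrightarrow> indep Z S \<Longrightarrow> indep Z' S"
  unfolding indep_def by blast

definition rem :: "'v \<Rightarrow> ('v \<Rightarrow>\<^sub>0 nat) \<Rightarrow> ('v \<Rightarrow>\<^sub>0 nat)" where
  "rem j m = Abs_poly_mapping (\<lambda>v. if v = j then 0 else Poly_Mapping.lookup m v)"

lemma lookup_rem: "Poly_Mapping.lookup (rem j m) = (\<lambda>v. if v = j then 0 else Poly_Mapping.lookup m v)"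
proof -
  have "{v. (if v = j then 0 else Poly_Mapping.lookup m v) \<noteq> 0} \<subseteq> Poly_Mapping.keys m"
    by (auto simp: in_keys_iff)
  then have "finite {v. (if v = j then 0 else Poly_Mapping.lookup m v) \<noteq> 0}"
    using finite_subset finite_keys by blast
  then show ?thesis unfolding rem_def by simp
qed

lemma keys_rem: "Poly_Mapping.keys (rem j m) = Poly_Mapping.keys m - {j}"
  by (auto simp: in_keys_iff lookup_rem split: if_splits)

lemma mnm_rem: "mnm m x = mnm (rem j m) x * x j ^ Poly_Mapping.lookup m j"
proof -
  let ?V = "insert j (Poly_Mapping.keys m)"
  have fV: "finite ?V" by simp
  have "mnm m x = (\<Prod>v\<in>?V. x v ^ Poly_Mapping.lookup m v)"
    by (rule mnm_superset) auto
  also have "\<dots> = x j ^ Poly_Mapping.lookup m j * (\<Prod>v\<in>?V - {j}. x v ^ Poly_Mapping.lookup m v)"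
    by (rule prod.remove) auto
  also have "(\<Prod>v\<in>?V - {j}. x v ^ Poly_Mapping.lookup m v) = (\<Prod>v\<in>?V - {j}. x v ^ Poly_Mapping.lookup (rem j m) v)"
    by (rule prod.cong) (auto simp: lookup_rem)
  also have "\<dots> = x j ^ Poly_Mapping.lookup (rem j m) j * (\<Prod>v\<in>?V - {j}. x v ^ Poly_Mapping.lookup (rem j m) v)"
    by (simp add: lookup_rem)
  also have "\<dots> = (\<Prod>v\<in>?V. x v ^ Poly_Mapping.lookup (rem j m) v)"
    by (rule prod.remove[symmetric]) auto
  also have "\<dots> = mnm (rem j m) x"
    by (rule mnm_superset[symmetric]) (auto simp: keys_rem)
  finally show ?thesis by (simp add: mult.commute)
qed

definition coeffL where
  "coeffL j i L = map (\<lambda>(c, m). (c, rem j m)) (filter (\<lambda>(c, m). Poly_Mapping.lookup m j = i) L)"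

lemma coeffL_Cons: "coeffL j i ((c, m) # L) =
   (if Poly_Mapping.lookup m j = i then [(c, rem j m)] else []) @ coeffL j i L"
  by (simp add: coeffL_def)

lemma lvars_coeffL: "lvars (coeffL j i L) \<subseteq> lvars L - {j}"
proof (induction L)
  case Nil then show ?case by (simp add: coeffL_def)
next
  case (Cons p L)
  obtain c m where p: "p = (c, m)" by force
  show ?case using Cons by (auto simp: p coeffL_Cons keys_rem)
qed

lemma lval_decomp:
  assumes "\<forall>(c, m)\<in>set L. Poly_Mapping.lookup m j \<le> K"
  shows "lval L x = (\<Sum>i\<le>K. lval (coeffL j i L) x * x j ^ i)"
  using assms
proof (induction L)
  case Nil then show ?case by (simp add: coeffL_def)
next
  case (Cons p L)
  obtain c m where p: "p = (c, m)" by force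
  have le: "Poly_Mapping.lookup m j \<le> K" using Cons.prems p by auto
  have "(\<Sum>i\<le>K. lval (coeffL j i (p # L)) x * x j ^ i)
      = (\<Sum>i\<le>K. (if Poly_Mapping.lookup m j = i then c * mnm (rem j m) x * x j ^ i else 0))
        + (\<Sum>i\<le>K. lval (coeffL j i L) x * x j ^ i)"
  proof -
    have e1: "lval (coeffL j i (p # L)) x * x j ^ i = (if Poly_Mapping.lookup m j = i then c * mnm (rem j m) x * x j ^ i else 0) + lval (coeffL j i L) x * x j ^ i" for i
      by (simp add: p coeffL_Cons distrib_right)
    show ?thesis unfolding e1 by (rule sum.distrib)
  qed
  also have "(\<Sum>i\<le>K. (if Poly_Mapping.lookup m j = i then c * mnm (rem j m) x * x j ^ i else 0))
      = c * mnm (rem j m) x * x j ^ Poly_Mapping.lookup m j"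
    using le by (simp add: sum.delta)
  also have "\<dots> = c * mnm m x" by (simp add: mnm_rem[of m x j])
  also have "(\<Sum>i\<le>K. lval (coeffL j i L) x * x j ^ i) = lval L x"
    using Cons by auto
  finally show ?case by (simp add: p)
qed

lemma coord_alg:
  assumes Zne: "Z \<noteq> {}" and ind: "indep Z S" and dep: "\<not> indep Z (insert j S)"
  shows "alg Z S (\<lambda>x. x j)"
proof -
  obtain F where F: "F \<in> PF (insert j S)" "\<forall>x\<in>Z. F x = 0" "\<not> (\<forall>x. F x = 0)"
    using dep unfolding indep_def by blast
  obtain L where L: "lvars L \<subseteq> insert j S" "F = lval L" using F(1) by (rule PF_E)
  have "finite ((\<lambda>(c, m). Poly_Mapping.lookup m j) ` set L)" by simp
  then obtain K where K: "\<forall>k\<in>(\<lambda>(c, m). Poly_Mapping.lookup m j) ` set L. k \<le> K"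
    using finite_nat_set_iff_bounded_le by blast
  then have K': "\<forall>(c, m)\<in>set L. Poly_Mapping.lookup m j \<le> K" by auto
  define a where "a i = lval (coeffL j i L)" for i
  have aP: "a i \<in> PF S" for i
    unfolding a_def by (rule PF_I[OF _ refl]) (use lvars_coeffL[of j i L] L(1) in blast)
  have Fx: "F x = (\<Sum>i\<le>K. a i x * x j ^ i)" for x
    unfolding L(2) a_def by (rule lval_decomp[OF K'])
  have nz: "\<exists>i\<le>K. \<exists>x\<in>Z. a i x \<noteq> 0"
  proof (rule ccontr)
    assume "\<not> ?thesis"
    then have "\<forall>i\<le>K. \<forall>x. a i x = 0" using ind aP unfolding indep_def by blast
    then have "\<forall>x. F x = 0" unfolding Fx by simp
    then show False using F(3) by blast
  qed
  have "\<forall>x\<in>Z. (\<Sum>i\<le>K. a i x * x j ^ i) = 0" using F(2) Fx by simp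
  then show ?thesis unfolding alg_def using aP nz by blast
qed

lemma strict_step:
  assumes irr: "proj_irreducible N Z" and irr': "proj_irreducible N Z'" and sub: "Z \<subset> Z'"
    and ind: "indep Z S"
  shows "\<exists>j. j \<notin> S \<and> indep Z' (insert j S)"
proof (rule ccontr)
  assume nj: "\<not> ?thesis"
  have indZ': "indep Z' S" using indep_mono[OF _ ind] sub by blast
  have Z'ne: "Z' \<noteq> {}" using irr' unfolding proj_irreducible_def by blast
  have vars: "alg Z' S (\<lambda>x. x j)" for j
  proof (cases "j \<in> S")
    case True
    show ?thesis using alg_lin[OF Z'ne PF_var[OF True]] .
  next
    case False
    then have "\<not> indep Z' (insert j S)" using nj by blast
    then show ?thesis by (rule coord_alg[OF Z'ne indZ'])
  qed
  have clZ: "proj_closed N Z" and clZ': "proj_closed N Z'"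
    using irr irr' unfolding proj_irreducible_def by blast+
  obtain FF where FF: "\<forall>f\<in>FF. homogeneous f" "Z = {x \<in> proj_points N. \<forall>f\<in>FF. cpoly_eval f x = 0}"
    using clZ unfolding proj_closed_def by blast
  obtain x' where x': "x' \<in> Z'" "x' \<notin> Z" using sub by blast
  have "x' \<in> proj_points N" using x'(1) closed_sub[OF clZ'] by blast
  then obtain f where f: "f \<in> FF" "cpoly_eval f x' \<noteq> 0" using x'(2) FF(2) by blast
  obtain L where L: "cpoly_eval f = lval L" using PF_cpoly[of f] by (auto elim: PF_E)
  have fZ: "\<forall>x\<in>Z. lval L x = 0" using FF(2) f(1) L by auto
  have fx': "lval L x' \<noteq> 0" using f(2) L by simp
  have "alg Z' S (lval L)" by (rule alg_lval[OF irr' vars])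
  then obtain k a where ka: "\<forall>i\<le>k. a i \<in> PF S" "\<exists>i\<le>k. \<exists>x\<in>Z'. a i x \<noteq> 0"
      "\<forall>x\<in>Z'. (\<Sum>i\<le>k. a i x * lval L x ^ i) = 0"
    unfolding alg_def by blast
  define P where "P = {i. i \<le> k \<and> (\<exists>x\<in>Z'. a i x \<noteq> 0)}"
  have fP: "finite P" unfolding P_def by simp
  have neP: "P \<noteq> {}" using ka(2) unfolding P_def by blast
  define i0 where "i0 = Min P"
  have i0P: "i0 \<in> P" unfolding i0_def using fP neP by (rule Min_in)
  have i0min: "i \<in> P \<Longrightarrow> i0 \<le> i" for i unfolding i0_def using fP by simp
  have i0k: "i0 \<le> k" using i0P unfolding P_def by blast
  define G where "G = (\<lambda>x. \<Sum>i\<in>{i0..k}. a i x * lval L x ^ (i - i0))"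
  have GP: "G \<in> PF UNIV"
    unfolding G_def
  proof (rule PF_sum)
    fix i assume "i \<in> {i0..k}"
    then have "a i \<in> PF UNIV" using ka(1) PF_mono[of S UNIV] by auto
    then show "(\<lambda>x. a i x * lval L x ^ (i - i0)) \<in> PF UNIV"
      by (rule PF_mult[OF _ PF_power[OF PF_lval]])
  qed simp
  have prod0: "\<forall>x\<in>Z'. lval L x ^ i0 * G x = 0"
  proof
    fix x assume x: "x \<in> Z'"
    have "(\<Sum>i\<le>k. a i x * lval L x ^ i) = (\<Sum>i\<in>{i0..k}. a i x * lval L x ^ i)"
    proof (rule sum.mono_neutral_right)
      show "finite {..k}" by simp
      show "{i0..k} \<subseteq> {..k}" by auto
      show "\<forall>i\<in>{..k} - {i0..k}. a i x * lval L x ^ i = 0"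
      proof
        fix i assume i: "i \<in> {..k} - {i0..k}"
        then have "i < i0" by auto
        then have "i \<notin> P" using i0min by fastforce
        then have "a i x = 0" using i x unfolding P_def by auto
        then show "a i x * lval L x ^ i = 0" by simp
      qed
    qed
    also have "\<dots> = lval L x ^ i0 * G x"
      unfolding G_def sum_distrib_left
    proof (rule sum.cong)
      fix i assume "i \<in> {i0..k}"
      then have "i = i0 + (i - i0)" by auto
      then have "lval L x ^ i = lval L x ^ i0 * lval L x ^ (i - i0)"
        by (metis power_add)
      then show "a i x * lval L x ^ i = lval L x ^ i0 * (a i x * lval L x ^ (i - i0))"
        by (simp add: mult_ac)
    qed simp
    finally show "lval L x ^ i0 * G x = 0" using ka(3) x by simp
  qed
  have "(\<forall>x\<in>Z'. lval L x ^ i0 = 0) \<or> (\<forall>x\<in>Z'. G x = 0)"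
    by (rule domain_PF[OF irr' PF_power[OF PF_lval] GP prod0])
  moreover have "\<not> (\<forall>x\<in>Z'. lval L x ^ i0 = 0)" using x'(1) fx' by auto
  ultimately have G0: "\<forall>x\<in>Z'. G x = 0" by blast
  have "\<forall>x\<in>Z. a i0 x = 0"
  proof
    fix x assume x: "x \<in> Z"
    then have "G x = 0" using G0 sub by blast
    moreover have "G x = a i0 x"
    proof -
      have "G x = a i0 x * lval L x ^ (i0 - i0) + (\<Sum>i\<in>{i0..k} - {i0}. a i x * lval L x ^ (i - i0))"
        unfolding G_def by (rule sum.remove) (use i0k in auto)
      also have "(\<Sum>i\<in>{i0..k} - {i0}. a i x * lval L x ^ (i - i0)) = 0"
      proof (rule sum.neutral, rule ballI)
        fix i assume "i \<in> {i0..k} - {i0}"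
        then have "i - i0 \<noteq> 0" by auto
        then show "a i x * lval L x ^ (i - i0) = 0" using fZ x by simp
      qed
      finally show ?thesis by simp
    qed
    ultimately show "a i0 x = 0" by simp
  qed
  then have "\<forall>x. a i0 x = 0" using ind ka(1) i0k unfolding indep_def by blast
  then show False using i0P unfolding P_def by blast
qed

lemma indep_base:
  assumes cl: "proj_closed N Z" and ne: "Z \<noteq> {}"
  shows "\<exists>v. indep Z {v}"
proof -
  obtain x where x: "x \<in> Z" using ne by blast
  then have "x \<in> proj_points N" using closed_sub[OF cl] by blast
  then obtain v where v: "x v \<noteq> 0" unfolding proj_points_def by blast
  have "indep Z {v}" unfolding indep_def
  proof (intro ballI impI)
    fix F assume F: "F \<in> PF {v}" "\<forall>x\<in>Z. F x = 0"
    obtain L where L: "lvars L \<subseteq> {v}" "F = lval L" using F(1) by (rule PF_E)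
    define Q where "Q = (\<Sum>(c, m)\<leftarrow>L. monom c (Poly_Mapping.lookup m v))"
    have Qeq: "lval L y = poly Q (y v)" for y
      using L(1) unfolding Q_def
    proof (induction L)
      case Nil then show ?case by simp
    next
      case (Cons p L)
      obtain c m where p: "p = (c, m)" by force
      have "Poly_Mapping.keys m \<subseteq> {v}" using Cons.prems p by simp
      then have "mnm m y = y v ^ Poly_Mapping.lookup m v"
        using mnm_superset[of "{v}" m y] by simp
      then show ?case using Cons p by (simp add: poly_monom)
    qed
    have "Q = 0"
    proof (rule poly_zero_nz)
      fix s :: complex assume s: "s \<noteq> 0"
      define t where "t = s / x v"
      have t: "t \<noteq> 0" using s v unfolding t_def by simp
      have "(\<lambda>w. t * x w) \<in> Z" by (rule cone[OF cl x t])
      then have "lval L (\<lambda>w. t * x w) = 0" using F(2) L(2) by blast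
      moreover have "t * x v = s" using v unfolding t_def by simp
      ultimately show "poly Q s = 0" using Qeq[of "\<lambda>w. t * x w"] by simp
    qed
    then show "\<forall>x. F x = 0" using Qeq L(2) by simp
  qed
  then show ?thesis by blast
qed

lemma chain_indep:
  assumes irr: "\<forall>i\<le>k. proj_irreducible N (Z i) \<and> Z i \<subseteq> X" and ch: "\<forall>i<k. Z i \<subset> Z (Suc i)"
  shows "\<exists>S. finite S \<and> card S = Suc k \<and> indep X S"
proof -
  have "i \<le> k \<Longrightarrow> \<exists>S. finite S \<and> card S = Suc i \<and> indep (Z i) S" for i
  proof (induction i)
    case 0
    have "proj_closed N (Z 0)" "Z 0 \<noteq> {}" using irr unfolding proj_irreducible_def by auto
    then obtain v where "indep (Z 0) {v}" using indep_base by blast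
    then show ?case by (intro exI[of _ "{v}"]) auto
  next
    case (Suc i)
    then obtain S where S: "finite S" "card S = Suc i" "indep (Z i) S" by auto
    have "proj_irreducible N (Z i)" "proj_irreducible N (Z (Suc i))" "Z i \<subset> Z (Suc i)"
      using irr ch Suc.prems by auto
    then obtain j where j: "j \<notin> S" "indep (Z (Suc i)) (insert j S)"
      using strict_step S(3) by blast
    then show ?case using S by (intro exI[of _ "insert j S"]) auto
  qed
  then obtain S where S: "finite S" "card S = Suc k" "indep (Z k) S" by blast
  moreover have "Z k \<subseteq> X" using irr by blast
  ultimately show ?thesis using indep_mono by blast
qed

definition polyfun :: "(complex \<Rightarrow> complex) \<Rightarrow> bool" where
  "polyfun h \<longleftrightarrow> (\<exists>p. \<forall>t. h t = poly p t)"

lemma pf_const: "polyfun (\<lambda>t. c)"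
  unfolding polyfun_def by (rule exI[of _ "[:c:]"]) simp

lemma pf_id: "polyfun (\<lambda>t. t)"
  unfolding polyfun_def by (rule exI[of _ "[:0, 1:]"]) simp

lemma pf_add: "polyfun f \<Longrightarrow> polyfun g \<Longrightarrow> polyfun (\<lambda>t. f t + g t)"
  unfolding polyfun_def by (metis poly_add)

lemma pf_mult: "polyfun f \<Longrightarrow> polyfun g \<Longrightarrow> polyfun (\<lambda>t. f t * g t)"
  unfolding polyfun_def by (metis poly_mult)

lemma pf_power: "polyfun f \<Longrightarrow> polyfun (\<lambda>t. f t ^ k)"
proof (induction k)
  case 0 then show ?case using pf_const[of 1] by simp
next
  case (Suc k) then show ?case using pf_mult[of f "\<lambda>t. f t ^ k"] by simp
qed

lemma pf_sum: "finite I \<Longrightarrow> (\<And>i. i \<in> I \<Longrightarrow> polyfun (f i)) \<Longrightarrow> polyfun (\<lambda>t. \<Sum>i\<in>I. f i t)"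
proof (induction I rule: finite_induct)
  case empty then show ?case using pf_const[of 0] by simp
next
  case (insert i I) then show ?case using pf_add[of "f i" "\<lambda>t. \<Sum>i\<in>I. f i t"] by simp
qed

lemma pf_prod: "finite I \<Longrightarrow> (\<And>i. i \<in> I \<Longrightarrow> polyfun (f i)) \<Longrightarrow> polyfun (\<lambda>t. \<Prod>i\<in>I. f i t)"
proof (induction I rule: finite_induct)
  case empty then show ?case using pf_const[of 1] by simp
next
  case (insert i I) then show ?case using pf_mult[of "f i" "\<lambda>t. \<Prod>i\<in>I. f i t"] by simp
qed

lemma pf_affine: "polyfun (\<lambda>t. a + t * b)"
  using pf_add[OF pf_const pf_mult[OF pf_id pf_const]] by simp

lemma pf_cpoly:
  assumes "\<And>v. polyfun (\<lambda>t. y t v)"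
  shows "polyfun (\<lambda>t. cpoly_eval f (y t))"
  unfolding cpoly_eval_def
  by (intro pf_sum pf_mult pf_const pf_prod pf_power assms finite_keys)

lemma eval_zero_vec:
  assumes "homogeneous f"
  shows "cpoly_eval f (\<lambda>v. 0) = 0 \<or> (\<forall>x. cpoly_eval f x = cpoly_eval f (\<lambda>v. 0))"
proof -
  obtain d where d: "\<forall>m\<in>Poly_Mapping.keys f. mono_deg m = d" using assms unfolding homogeneous_def by blast
  have e: "cpoly_eval f (\<lambda>v. 0 * x v) = 0 ^ d * cpoly_eval f x" for x
    by (rule cpoly_eval_scale) (rule d)
  show ?thesis
  proof (cases "d = 0")
    case True
    have e0: "cpoly_eval f (\<lambda>v. 0) = cpoly_eval f x" for x using e[of x] True by simp
    show ?thesis using e0 by metis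
  next
    case False
    then have "cpoly_eval f (\<lambda>v. 0) = 0" using e[of "\<lambda>v. 0"] by (simp add: power_0_left)
    then show ?thesis by blast
  qed
qed

lemma closure_irreducible:
  fixes \<phi> :: "'p \<Rightarrow> ('v \<Rightarrow> complex)"
  assumes Y0: "Y0 = \<phi> ` F \<inter> proj_points N"
    and ne: "Y0 \<noteq> {}"
    and supp: "\<And>\<mu> v. v \<notin> N \<Longrightarrow> \<phi> \<mu> v = 0"
    and lineF: "\<And>\<mu>1 \<mu>2 t. \<mu>1 \<in> F \<Longrightarrow> \<mu>2 \<in> F \<Longrightarrow> lin \<mu>1 \<mu>2 t \<in> F"
    and line0: "\<And>\<mu>1 \<mu>2. lin \<mu>1 \<mu>2 0 = \<mu>1"
    and line1: "\<And>\<mu>1 \<mu>2. lin \<mu>1 \<mu>2 1 = \<mu>2"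
    and linep: "\<And>\<mu>1 \<mu>2 v. polyfun (\<lambda>t. \<phi> (lin \<mu>1 \<mu>2 t) v)"
  shows "proj_irreducible N (zariski_closure N Y0)"
proof -
  let ?C = "zariski_closure N Y0"
  have Ypp: "Y0 \<subseteq> proj_points N" using Y0 by blast
  have clC: "proj_closed N ?C" by (rule zc_closed[OF Ypp])
  have YC: "Y0 \<subseteq> ?C" by (rule zc_ext[OF Ypp])
  have neC: "?C \<noteq> {}" using ne YC by blast
  have irr: "?C = A \<or> ?C = B" if A: "proj_closed N A" and B: "proj_closed N B" and CAB: "?C = A \<union> B" for A B
  proof (rule ccontr)
    assume nc: "\<not> ?thesis"
    have nYA: "\<not> Y0 \<subseteq> A"
    proof
      assume "Y0 \<subseteq> A"
      then have "?C \<subseteq> A" by (rule zc_least[OF A])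
      then show False using nc CAB by blast
    qed
    have nYB: "\<not> Y0 \<subseteq> B"
    proof
      assume "Y0 \<subseteq> B"
      then have "?C \<subseteq> B" by (rule zc_least[OF B])
      then show False using nc CAB by blast
    qed
    obtain FA where FA: "\<forall>f\<in>FA. homogeneous f" "A = {x \<in> proj_points N. \<forall>f\<in>FA. cpoly_eval f x = 0}"
      using A unfolding proj_closed_def by blast
    obtain FB where FB: "\<forall>f\<in>FB. homogeneous f" "B = {x \<in> proj_points N. \<forall>f\<in>FB. cpoly_eval f x = 0}"
      using B unfolding proj_closed_def by blast
    obtain y1 where y1: "y1 \<in> Y0" "y1 \<notin> A" using nYA by blast
    obtain y2 where y2: "y2 \<in> Y0" "y2 \<notin> B" using nYB by blast
    obtain \<mu>1 where \<mu>1: "\<mu>1 \<in> F" "y1 = \<phi> \<mu>1" using y1(1) Y0 by blast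
    obtain \<mu>2 where \<mu>2: "\<mu>2 \<in> F" "y2 = \<phi> \<mu>2" using y2(1) Y0 by blast
    obtain fA where fA: "fA \<in> FA" "cpoly_eval fA y1 \<noteq> 0" using y1 Ypp FA(2) by blast
    obtain fB where fB: "fB \<in> FB" "cpoly_eval fB y2 \<noteq> 0" using y2 Ypp FB(2) by blast
    have fA0: "cpoly_eval fA (\<lambda>v. 0) = 0"
    proof (rule ccontr)
      assume h0: "cpoly_eval fA (\<lambda>v. 0) \<noteq> 0"
      then have "\<forall>x. cpoly_eval fA x = cpoly_eval fA (\<lambda>v. 0)" using eval_zero_vec[of fA] FA(1) fA(1) by blast
      then have "\<forall>x. cpoly_eval fA x \<noteq> 0" using h0 by metis
      then have "A = {}" using FA(2) fA(1) by blast
      then show False using nc CAB by blast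
    qed
    have fB0: "cpoly_eval fB (\<lambda>v. 0) = 0"
    proof (rule ccontr)
      assume h0: "cpoly_eval fB (\<lambda>v. 0) \<noteq> 0"
      then have "\<forall>x. cpoly_eval fB x = cpoly_eval fB (\<lambda>v. 0)" using eval_zero_vec[of fB] FB(1) fB(1) by blast
      then have "\<forall>x. cpoly_eval fB x \<noteq> 0" using h0 by metis
      then have "B = {}" using FB(2) fB(1) by blast
      then show False using nc CAB by blast
    qed
    define y where "y t = \<phi> (lin \<mu>1 \<mu>2 t)" for t
    have pA: "polyfun (\<lambda>t. cpoly_eval fA (y t))" unfolding y_def by (rule pf_cpoly[OF linep])
    have pB: "polyfun (\<lambda>t. cpoly_eval fB (y t))" unfolding y_def by (rule pf_cpoly[OF linep])
    obtain pa where pa: "\<forall>t. cpoly_eval fA (y t) = poly pa t" using pA unfolding polyfun_def by blast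
    obtain pb where pb: "\<forall>t. cpoly_eval fB (y t) = poly pb t" using pB unfolding polyfun_def by blast
    have "poly pa 0 = cpoly_eval fA (y 0)" using pa by simp
    also have "y 0 = y1" unfolding y_def line0 \<mu>1(2) ..
    finally have "poly pa 0 \<noteq> 0" using fA(2) by simp
    then have paz: "pa \<noteq> 0" by auto
    have "poly pb 1 = cpoly_eval fB (y 1)" using pb by simp
    also have "y 1 = y2" unfolding y_def line1 \<mu>2(2) ..
    finally have "poly pb 1 \<noteq> 0" using fB(2) by simp
    then have pbz: "pb \<noteq> 0" by auto
    from paz pbz have "pa * pb \<noteq> 0" by simp
    then obtain t where t: "poly (pa * pb) t \<noteq> 0" using poly_all_0_iff_0 by blast
    then have ta: "cpoly_eval fA (y t) \<noteq> 0" and tb: "cpoly_eval fB (y t) \<noteq> 0" using pa pb by auto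
    have "y t \<noteq> (\<lambda>v. 0)" using ta fA0 by auto
    then have "y t \<in> proj_points N" unfolding proj_points_def y_def using supp by auto
    moreover have "lin \<mu>1 \<mu>2 t \<in> F" by (rule lineF[OF \<mu>1(1) \<mu>2(1)])
    ultimately have "y t \<in> Y0" unfolding Y0 y_def by blast
    then have "y t \<in> A \<union> B" using YC CAB by blast
    then show False using ta tb FA(2) FB(2) fA(1) fB(1) by blast
  qed
  show ?thesis unfolding proj_irreducible_def using clC neC irr by blast
qed

definition pad :: "nat \<Rightarrow> nat list \<Rightarrow> nat list" where
  "pad n lam = lam @ replicate (n - length lam) 0"

lemma filter_pad:
  assumes "is_partition lam" shows "filter (\<lambda>i. i \<noteq> 0) (pad n lam) = lam"
proof -
  have "\<forall>x\<in>set lam. x \<noteq> 0" using assms unfolding is_partition_def by auto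
  then have "filter (\<lambda>i. i \<noteq> 0) lam = lam" by (simp add: filter_id_conv)
  then show ?thesis unfolding pad_def by simp
qed

lemma length_pad: "length lam \<le> n \<Longrightarrow> length (pad n lam) = n"
  unfolding pad_def by simp

lemma idx_iff:
  assumes part: "is_partition lam" and len: "length lam \<le> n"
  shows "is \<in> index_set n lam \<longleftrightarrow> length is = n \<and> mset is = mset (pad n lam)"
proof
  assume "is \<in> index_set n lam"
  then have L: "length is = n" and M: "mset (filter (\<lambda>i. i \<noteq> 0) is) = mset lam"
    unfolding index_set_def by auto
  have "mset is = {#x \<in># mset is. x \<noteq> 0#} + {#x \<in># mset is. \<not> x \<noteq> 0#}"
    by (rule multiset_partition)
  also have "{#x \<in># mset is. x \<noteq> 0#} = mset lam" using M by simp
  also have "{#x \<in># mset is. \<not> x \<noteq> 0#} = {#x \<in># mset is. x = 0#}" by simp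
  also have "\<dots> = replicate_mset (count (mset is) 0) 0" by (rule filter_eq_replicate_mset)
  finally have E: "mset is = mset lam + replicate_mset (count (mset is) 0) 0" .
  then have "size (mset is) = size (mset lam) + count (mset is) 0"
    by (metis size_replicate_mset size_union)
  then have "count (mset is) 0 = n - length lam" using L by simp
  then have "mset is = mset (pad n lam)" using E unfolding pad_def by simp
  then show "length is = n \<and> mset is = mset (pad n lam)" using L by simp
next
  assume A: "length is = n \<and> mset is = mset (pad n lam)"
  have "mset (filter (\<lambda>i. i \<noteq> 0) is) = mset (filter (\<lambda>i. i \<noteq> 0) (pad n lam))"
    using A by simp
  also have "\<dots> = mset lam" using filter_pad[OF part] by simp
  finally show "is \<in> index_set n lam" using A unfolding index_set_def by simp
qed

lemma pad_in: "is_partition lam \<Longrightarrow> length lam \<le> n \<Longrightarrow> pad n lam \<in> index_set n lam"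
  using idx_iff length_pad by blast

lemma idx_set:
  assumes "is_partition lam" "length lam \<le> n" "is \<in> index_set n lam"
  shows "set is = set (pad n lam)" "length is = n"
  using idx_iff[OF assms(1,2)] assms(3) by (metis mset_eq_setD)+

lemma idx_finite:
  assumes "is_partition lam" "length lam \<le> n"
  shows "finite (index_set n lam)"
proof -
  have "index_set n lam \<subseteq> {xs. set xs \<subseteq> set (pad n lam) \<and> length xs = n}"
    using idx_set[OF assms] by blast
  then show ?thesis by (rule finite_subset[OF _ finite_lists_length_eq[OF finite_set]])
qed

lemma count_nth: "(\<Sum>k<length xs. (if xs ! k = w then 1 else 0 :: int)) = int (count (mset xs) w)"
proof (induction xs)
  case Nil then show ?case by simp
next
  case (Cons a xs)
  show ?case using Cons by (simp add: sum.lessThan_Suc_shift del: sum.lessThan_Suc)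
qed

lemma swap_pair:
  assumes part: "is_partition lam" and len: "length lam \<le> n"
    and x: "x \<in> set (pad n lam)" and y: "y \<in> set (pad n lam)" and xy: "x \<noteq> y"
    and k0: "0 < k0" "k0 < n"
  shows "\<exists>a b. a \<in> index_set n lam \<and> b \<in> index_set n lam \<and> a ! 0 = x \<and> a ! k0 = y \<and>
     b ! 0 = y \<and> b ! k0 = x \<and> (\<forall>k. k \<noteq> 0 \<longrightarrow> k \<noteq> k0 \<longrightarrow> a ! k = b ! k)"
proof -
  let ?P = "pad n lam"
  define R where "R = remove1 x (remove1 y ?P)"
  have xR: "x \<in> set (remove1 y ?P)" using x xy by (simp add: in_set_remove1)
  have lenR: "length R = n - 2"
    unfolding R_def using xR y length_pad[OF len] by (simp add: length_remove1)
  have msR: "add_mset x (add_mset y (mset R)) = mset ?P"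
  proof -
    have xM: "x \<in># mset (remove1 y ?P)" using xR by (simp only: set_mset_mset)
    have "mset R = mset (remove1 y ?P) - {#x#}" unfolding R_def by (rule mset_remove1)
    then have "add_mset x (mset R) = mset (remove1 y ?P)" using insert_DiffM[OF xM] by simp
    then show ?thesis using y by (simp add: insert_DiffM add_mset_commute[of x y])
  qed
  define mk where "mk u v = u # (take (k0 - 1) R @ v # drop (k0 - 1) R)" for u v :: nat
  have mset_mk: "mset (mk u v) = add_mset u (add_mset v (mset R))" for u v
  proof -
    have "mset (take (k0 - 1) R) + mset (drop (k0 - 1) R) = mset R"
      by (metis append_take_drop_id mset_append)
    then show ?thesis unfolding mk_def by (simp add: add_mset_commute)
  qed
  have ltk: "k0 - 1 \<le> length R" using k0 lenR by simp
  have len_mk: "length (mk u v) = n" for u v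
    unfolding mk_def using ltk lenR k0 by simp
  have nth0: "mk u v ! 0 = u" for u v unfolding mk_def by simp
  have nthk: "mk u v ! k0 = v" for u v
  proof -
    obtain k' where k': "k0 = Suc k'" using k0 by (cases k0) auto
    have "length (take (k0 - 1) R) = k'" using ltk k' by simp
    then show ?thesis unfolding mk_def k' by (simp add: nth_append)
  qed
  have nthk': "mk u v ! k = mk v u ! k" if kk: "k \<noteq> 0" "k \<noteq> k0" for u v k
  proof -
    obtain k' where k': "k = Suc k'" using kk by (cases k) auto
    obtain k0' where k0': "k0 = Suc k0'" using k0 by (cases k0) auto
    have lt: "length (take (k0 - 1) R) = k0'" using ltk k0' by simp
    have "k' \<noteq> k0'" using kk k' k0' by simp
    then show ?thesis unfolding mk_def k' using lt by (simp add: nth_append nth_Cons split: nat.splits)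
  qed
  have inN: "mk u v \<in> index_set n lam" if "{u, v} = {x, y}" for u v
  proof -
    have "mset (mk u v) = mset ?P"
      using that msR mset_mk[of u v] by (auto simp: doubleton_eq_iff add_mset_commute)
    then show ?thesis using idx_iff[OF part len] len_mk by blast
  qed
  show ?thesis
    by (rule exI[of _ "mk x y"], rule exI[of _ "mk y x"])
       (use inN[of x y] inN[of y x] nth0 nthk nthk' in \<open>auto simp: insert_commute\<close>)
qed

lemma mp_in: "is \<in> index_set n lam \<Longrightarrow>
  moment_point n lam mu is = (\<Prod>k<n. if is ! k = 0 then 1 else mu k (is ! k))"
  unfolding moment_point_def by simp

lemma mp_out: "is \<notin> index_set n lam \<Longrightarrow> moment_point n lam mu is = 0"
  unfolding moment_point_def by simp

lemma mono_deg_single: "mono_deg (Poly_Mapping.single v (1::nat)) = 1"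
  unfolding mono_deg_def by simp

lemma distinct_take_nth: "distinct xs \<Longrightarrow> i < length xs \<Longrightarrow> xs ! i \<notin> set (take i xs)"
proof
  assume d: "distinct xs" and i: "i < length xs" and m: "xs ! i \<in> set (take i xs)"
  then obtain j where j: "j < length (take i xs)" "take i xs ! j = xs ! i" by (auto simp: in_set_conv_nth)
  then have ji: "j < i" using i by simp
  then have "xs ! j = xs ! i" using j by simp
  then have "j = i" using nth_eq_iff_index_eq[OF d] ji i by simp
  then show False using ji by simp
qed

lemma lower_chain:
  assumes part: "is_partition lam" and len: "length lam \<le> n"
    and crd: "s + 1 = card (set (pad n lam))"
  shows "has_irred_chain (index_set n lam) (moment_variety n lam) ((n - 1) * s)"
proof -
  define N where "N = index_set n lam"
  define P where "P = pad n lam"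
  define W where "W = set P"
  have PN: "P \<in> N" unfolding P_def N_def by (rule pad_in[OF part len])
  have lenP: "length P = n" unfolding P_def by (rule length_pad[OF len])
  have n1: "n \<ge> 1"
  proof (rule ccontr)
    assume "\<not> n \<ge> 1"
    then have "n = 0" by simp
    then have "P = []" using lenP by simp
    then show False using crd unfolding P_def by simp
  qed
  define wst where "wst = (if 0 \<in> W then 0 else hd P)"
  have wstW: "wst \<in> W"
  proof (cases "0 \<in> W")
    case True then show ?thesis unfolding wst_def by simp
  next
    case False
    have "P \<noteq> []" using lenP n1 by auto
    then show ?thesis using False unfolding wst_def W_def by simp
  qed
  define W' where "W' = W - {wst}"
  have cardW': "card W' = s" unfolding W'_def using wstW crd unfolding W_def P_def by simp
  have W'0: "0 \<notin> W'" unfolding W'_def wst_def by auto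
  define PS where "PS = {1..<n} \<times> W'"
  have fPS: "finite PS" unfolding PS_def W'_def W_def by simp
  have cardPS: "card PS = (n - 1) * s" unfolding PS_def using cardW' by (simp add: card_cartesian_product)
  obtain ps where ps: "distinct ps" "set ps = PS" using finite_distinct_list[OF fPS] by blast
  have lenps: "length ps = (n - 1) * s" using distinct_card[OF ps(1)] ps(2) cardPS by simp
  define F where "F j = {mu. \<forall>k v. (k, v) \<notin> set (take j ps) \<longrightarrow> mu k v = (1::complex)}" for j
  define Y where "Y j = moment_point n lam ` F j \<inter> proj_points N" for j
  define Z where "Z j = zariski_closure N (Y j)" for j
  define X where "X = moment_variety n lam"
  have X: "X = zariski_closure N (range (moment_point n lam) \<inter> proj_points N)"
    unfolding X_def moment_variety_def N_def by (simp add: full_SetCompr_eq)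
  have supp: "moment_point n lam mu v = 0" if "v \<notin> N" for mu v
    using that mp_out unfolding N_def by blast
  have Ypp: "Y j \<subseteq> proj_points N" for j unfolding Y_def by blast
  define ones where "ones = (\<lambda>(k::nat) (v::nat). (1::complex))"
  have onesF: "ones \<in> F j" for j unfolding F_def ones_def by simp
  have ones_pp: "moment_point n lam ones \<in> proj_points N"
  proof -
    have "moment_point n lam ones P = 1" using PN unfolding N_def ones_def by (simp add: mp_in)
    then show ?thesis unfolding proj_points_def using supp by (auto intro!: exI[of _ P])
  qed
  have Yne: "Y j \<noteq> {}" for j using onesF ones_pp unfolding Y_def by blast
  define lin where "lin mu1 mu2 t = (\<lambda>k v. mu1 k v + t * (mu2 k v - mu1 k v))"
    for mu1 mu2 :: "nat \<Rightarrow> nat \<Rightarrow> complex" and t :: complex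
  have irr: "proj_irreducible N (Z j)" for j
    unfolding Z_def
  proof (rule closure_irreducible[where \<phi> = "moment_point n lam" and F = "F j" and lin = lin])
    show "Y j = moment_point n lam ` F j \<inter> proj_points N" by (simp add: Y_def)
    show "Y j \<noteq> {}" by (rule Yne)
    show "\<And>\<mu> v. v \<notin> N \<Longrightarrow> moment_point n lam \<mu> v = 0" by (rule supp)
    show "lin \<mu>1 \<mu>2 t \<in> F j" if "\<mu>1 \<in> F j" "\<mu>2 \<in> F j" for \<mu>1 \<mu>2 t
      using that unfolding F_def lin_def by simp
    show "lin \<mu>1 \<mu>2 0 = \<mu>1" for \<mu>1 \<mu>2 unfolding lin_def by simp
    show "lin \<mu>1 \<mu>2 1 = \<mu>2" for \<mu>1 \<mu>2 unfolding lin_def by simp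
    show "polyfun (\<lambda>t. moment_point n lam (lin \<mu>1 \<mu>2 t) v)" for \<mu>1 \<mu>2 v
    proof (cases "v \<in> index_set n lam")
      case True
      have "polyfun (\<lambda>t. \<Prod>k<n. if v ! k = 0 then 1 else lin \<mu>1 \<mu>2 t k (v ! k))"
      proof (rule pf_prod)
        fix k
        show "polyfun (\<lambda>t. if v ! k = 0 then 1 else lin \<mu>1 \<mu>2 t k (v ! k))"
          by (cases "v ! k = 0") (simp_all add: lin_def pf_const pf_affine)
      qed simp
      then show ?thesis using True by (simp add: mp_in)
    next
      case False
      then show ?thesis using pf_const[of 0] by (simp add: mp_out)
    qed
  qed
  have ZX: "Z j \<subseteq> X" for j
    unfolding Z_def X by (rule zc_mono) (auto simp: Y_def)
  have Fmono: "F j \<subseteq> F (Suc j)" for j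
    unfolding F_def using set_take_subset_set_take[of j "Suc j" ps] by auto
  have strict: "Z j \<subset> Z (Suc j)" if j: "j < (n - 1) * s" for j
  proof
    show sub: "Z j \<subseteq> Z (Suc j)" unfolding Z_def Y_def by (rule zc_mono) (use Fmono in blast)
    obtain k0 w0 where kw: "ps ! j = (k0, w0)" by force
    have "ps ! j \<in> PS" using ps(2) j lenps by (metis nth_mem)
    then have k0: "1 \<le> k0" "k0 < n" and w0: "w0 \<in> W'" using kw unfolding PS_def by auto
    have w0nz: "w0 \<noteq> 0" proof assume "w0 = 0" then show False using w0 W'0 by simp qed
    have w0W: "w0 \<in> W" "w0 \<noteq> wst" "w0 \<noteq> 0" using w0 w0nz unfolding W'_def by auto
    obtain a b where ab: "a \<in> N" "b \<in> N" "a ! 0 = wst" "a ! k0 = w0" "b ! 0 = w0" "b ! k0 = wst"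
        "\<forall>k. k \<noteq> 0 \<longrightarrow> k \<noteq> k0 \<longrightarrow> a ! k = b ! k"
      using swap_pair[OF part len, of wst w0 k0] wstW w0W k0 unfolding N_def W_def P_def by auto
    define L where "L = [(1::complex, Poly_Mapping.single a (1::nat)), (-1, Poly_Mapping.single b 1)]"
    have Lval: "lval L x = x a - x b" for x unfolding L_def by simp
    define V where "V = {x \<in> proj_points N. lval L x = 0}"
    have clV: "proj_closed N V" unfolding V_def
      by (rule closed_inter_lval[OF closed_pp, of L 1]) (use mono_deg_single[of a] mono_deg_single[of b] in \<open>simp add: L_def\<close>)
    have jnot: "(k0, w0) \<notin> set (take j ps)" using distinct_take_nth[OF ps(1), of j] j lenps kw by simp
    have "Y j \<subseteq> V"
    proof
      fix y assume "y \<in> Y j"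
      then obtain mu where mu: "mu \<in> F j" "y = moment_point n lam mu" "y \<in> proj_points N"
        unfolding Y_def by blast
      have one: "mu k v = 1" if "(k, v) \<notin> PS \<or> (k, v) = (k0, w0)" for k v
      proof -
        have "(k, v) \<notin> set (take j ps)"
          using that jnot set_take_subset[of j ps] ps(2) by blast
        then show ?thesis using mu(1) unfolding F_def by blast
      qed
      have fac: "(if a ! k = 0 then 1 else mu k (a ! k)) = (if b ! k = 0 then 1 else mu k (b ! k))" for k
      proof -
        consider "k = 0" | "k = k0" | "k \<noteq> 0" "k \<noteq> k0" by blast
        then show ?thesis
        proof cases
          case 1
          have "mu 0 w0 = 1" by (rule one) (simp add: PS_def)
          moreover have "wst \<noteq> 0 \<Longrightarrow> mu 0 wst = 1" by (rule one) (simp add: PS_def)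
          ultimately show ?thesis using 1 ab w0W by auto
        next
          case 2
          have "mu k0 w0 = 1" by (rule one) simp
          moreover have "wst \<noteq> 0 \<Longrightarrow> mu k0 wst = 1" by (rule one) (simp add: PS_def W'_def)
          ultimately show ?thesis using 2 ab w0W by auto
        next
          case 3
          then show ?thesis using ab(7) by simp
        qed
      qed
      have "y a = y b" unfolding mu(2) mp_in[OF ab(1)[unfolded N_def]] mp_in[OF ab(2)[unfolded N_def]]
        using fac by simp
      then show "y \<in> V" unfolding V_def using mu(3) Lval by simp
    qed
    then have ZV: "Z j \<subseteq> V" unfolding Z_def by (rule zc_least[OF clV])
    define mu2 where "mu2 = (\<lambda>k v. if k = k0 \<and> v = w0 then (2::complex) else 1)"
    have "ps ! j \<in> set (take (Suc j) ps)" using j lenps by (simp add: take_Suc_conv_app_nth)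
    then have mu2F: "mu2 \<in> F (Suc j)" unfolding F_def mu2_def using kw by auto
    have ya: "moment_point n lam mu2 a = 2"
    proof -
      have "moment_point n lam mu2 a = (\<Prod>k<n. if k = k0 then 2 else 1)"
        unfolding mp_in[OF ab(1)[unfolded N_def]]
        by (rule prod.cong) (use ab w0W in \<open>auto simp: mu2_def\<close>)
      also have "\<dots> = 2" using k0 by simp
      finally show ?thesis .
    qed
    have yb: "moment_point n lam mu2 b = 1"
    proof -
      have "moment_point n lam mu2 b = (\<Prod>k<n. 1)"
        unfolding mp_in[OF ab(2)[unfolded N_def]]
        by (rule prod.cong) (use ab w0W in \<open>auto simp: mu2_def\<close>)
      then show ?thesis by simp
    qed
    have y2pp: "moment_point n lam mu2 \<in> proj_points N"
      unfolding proj_points_def using supp yb by (auto intro!: exI[of _ b])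
    then have "moment_point n lam mu2 \<in> Y (Suc j)" unfolding Y_def using mu2F by blast
    then have "moment_point n lam mu2 \<in> Z (Suc j)" unfolding Z_def using zc_ext[OF Ypp] by blast
    moreover have "moment_point n lam mu2 \<notin> V" unfolding V_def Lval using ya yb by simp
    ultimately show "Z j \<noteq> Z (Suc j)" using ZV by blast
  qed
  show ?thesis unfolding has_irred_chain_def N_def[symmetric] X_def[symmetric]
    by (rule exI[of _ Z]) (use irr ZX strict in auto)
qed

lemma prod_regroup:
  fixes g :: "nat \<Rightarrow> nat \<Rightarrow> complex"
  assumes T: "finite T" and W: "finite W" and TW: "\<forall>is\<in>T. \<forall>k<n. is ! k \<in> W"
  shows "(\<Prod>is\<in>T. (\<Prod>k<n. g k (is ! k)) ^ a is) = (\<Prod>k<n. \<Prod>w\<in>W. g k w ^ (\<Sum>is\<in>{is\<in>T. is ! k = w}. a is))"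
proof -
  have "(\<Prod>is\<in>T. (\<Prod>k<n. g k (is ! k)) ^ a is) = (\<Prod>is\<in>T. \<Prod>k<n. g k (is ! k) ^ a is)"
    by (simp add: prod_power_distrib)
  also have "\<dots> = (\<Prod>k<n. \<Prod>is\<in>T. g k (is ! k) ^ a is)"
    by (rule prod.swap)
  also have "\<dots> = (\<Prod>k<n. \<Prod>w\<in>W. g k w ^ (\<Sum>is\<in>{is\<in>T. is ! k = w}. a is))"
  proof (rule prod.cong[OF refl])
    fix k assume k: "k \<in> {..<n}"
    have "(\<Prod>is\<in>T. g k (is ! k) ^ a is) = (\<Prod>w\<in>W. \<Prod>is\<in>{is \<in> T. is ! k = w}. g k (is ! k) ^ a is)"
      by (rule prod.group[symmetric]) (use T W TW k in auto)
    also have "\<dots> = (\<Prod>w\<in>W. \<Prod>is\<in>{is \<in> T. is ! k = w}. g k w ^ a is)"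
      by (rule prod.cong[OF refl], rule prod.cong[OF refl]) auto
    also have "\<dots> = (\<Prod>w\<in>W. g k w ^ (\<Sum>is\<in>{is\<in>T. is ! k = w}. a is))"
      by (simp add: power_sum)
    finally show "(\<Prod>is\<in>T. g k (is ! k) ^ a is) = (\<Prod>w\<in>W. g k w ^ (\<Sum>is\<in>{is\<in>T. is ! k = w}. a is))" .
  qed
  finally show ?thesis .
qed

lemma sum_sign_split:
  fixes e :: "'a \<Rightarrow> int"
  assumes "finite T"
  shows "(\<Sum>i\<in>T. e i) = int (\<Sum>i\<in>{i\<in>T. e i > 0}. nat (e i)) - int (\<Sum>i\<in>{i\<in>T. e i < 0}. nat (- e i))"
proof -
  have "(\<Sum>i\<in>T. e i) = (\<Sum>i\<in>{i\<in>T. e i > 0} \<union> {i\<in>T. e i < 0}. e i)"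
    by (rule sum.mono_neutral_right) (use assms in auto)
  also have "\<dots> = (\<Sum>i\<in>{i\<in>T. e i > 0}. e i) + (\<Sum>i\<in>{i\<in>T. e i < 0}. e i)"
    by (rule sum.union_disjoint) (use assms in auto)
  also have "(\<Sum>i\<in>{i\<in>T. e i > 0}. e i) = int (\<Sum>i\<in>{i\<in>T. e i > 0}. nat (e i))"
    by (simp add: of_nat_sum)
  also have "(\<Sum>i\<in>{i\<in>T. e i < 0}. e i) = - int (\<Sum>i\<in>{i\<in>T. e i < 0}. nat (- e i))"
    by (simp add: of_nat_sum sum_negf[symmetric])
  finally show ?thesis by simp
qed

definition pmon :: "'v set \<Rightarrow> ('v \<Rightarrow> nat) \<Rightarrow> ('v \<Rightarrow>\<^sub>0 nat)" where
  "pmon T a = Abs_poly_mapping (\<lambda>v. if v \<in> T then a v else 0)"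

lemma lookup_pmon: "finite T \<Longrightarrow> Poly_Mapping.lookup (pmon T a) = (\<lambda>v. if v \<in> T then a v else 0)"
proof -
  assume T: "finite T"
  have "{v. (if v \<in> T then a v else 0) \<noteq> 0} \<subseteq> T" by auto
  then have "finite {v. (if v \<in> T then a v else 0) \<noteq> 0}" using T finite_subset by blast
  then show ?thesis unfolding pmon_def by simp
qed

lemma keys_pmon: "finite T \<Longrightarrow> \<forall>v\<in>T. a v > 0 \<Longrightarrow> Poly_Mapping.keys (pmon T a) = T"
  by (auto simp: in_keys_iff lookup_pmon split: if_splits)

lemma mnm_pmon: "finite T \<Longrightarrow> \<forall>v\<in>T. a v > 0 \<Longrightarrow> mnm (pmon T a) x = (\<Prod>v\<in>T. x v ^ a v)"
  unfolding mnm_def by (simp add: keys_pmon lookup_pmon)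

lemma deg_pmon: "finite T \<Longrightarrow> \<forall>v\<in>T. a v > 0 \<Longrightarrow> mono_deg (pmon T a) = (\<Sum>v\<in>T. a v)"
  unfolding mono_deg_def by (simp add: keys_pmon lookup_pmon)

lemma wst_exists:
  assumes part: "is_partition lam" and len: "length lam \<le> n"
    and crd: "s + 1 = card (set (pad n lam))"
  shows "n \<ge> 1 \<and> (\<exists>wst. wst \<in> set (pad n lam) \<and> card (set (pad n lam) - {wst}) = s \<and> 0 \<notin> set (pad n lam) - {wst})"
proof -
  let ?P = "pad n lam"
  have lenP: "length ?P = n" by (rule length_pad[OF len])
  have n1: "n \<ge> 1"
  proof (rule ccontr)
    assume "\<not> n \<ge> 1"
    then have "n = 0" by simp
    then have "?P = []" using lenP by simp
    then show False using crd by simp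
  qed
  define wst where "wst = (if 0 \<in> set ?P then 0 else hd ?P)"
  have wstW: "wst \<in> set ?P"
  proof (cases "0 \<in> set ?P")
    case True then show ?thesis unfolding wst_def by simp
  next
    case False
    have "?P \<noteq> []" using lenP n1 by auto
    then show ?thesis using False unfolding wst_def by simp
  qed
  have "card (set ?P - {wst}) = s" using wstW crd by simp
  moreover have "0 \<notin> set ?P - {wst}" unfolding wst_def by auto
  ultimately show ?thesis using n1 wstW by blast
qed

lemma indepD: "indep Z S \<Longrightarrow> F \<in> PF S \<Longrightarrow> \<forall>x\<in>Z. F x = 0 \<Longrightarrow> F x = 0"
  unfolding indep_def by blast

lemma upper_bound:
  assumes part: "is_partition lam" and len: "length lam \<le> n"
    and crd: "s + 1 = card (set (pad n lam))"
    and Sf: "finite S" and Sc: "card S = Suc (Suc ((n - 1) * s))"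
    and ind: "indep (moment_variety n lam) S"
  shows False
proof -
  define N where "N = index_set n lam"
  define P where "P = pad n lam"
  define W where "W = set P"
  define X where "X = moment_variety n lam"
  have X: "X = zariski_closure N (range (moment_point n lam) \<inter> proj_points N)"
    unfolding X_def moment_variety_def N_def by (simp add: full_SetCompr_eq)
  have Xpp: "X \<subseteq> proj_points N" unfolding X by (rule zc_least[OF closed_pp]) blast
  have indX: "indep X S" using ind unfolding X_def .
  have SN: "S \<subseteq> N"
  proof
    fix j assume j: "j \<in> S"
    show "j \<in> N"
    proof (rule ccontr)
      assume jN: "j \<notin> N"
      have h1: "(\<lambda>x. x j) \<in> PF S" by (rule PF_var[OF j])
      have h2: "\<forall>x\<in>X. x j = 0" using Xpp jN unfolding proj_points_def by blast
      have "(\<lambda>x::nat list \<Rightarrow> complex. x j) (\<lambda>_. 1) = 0" by (rule indepD[OF indX h1 h2])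
      then show False by simp
    qed
  qed
  have WS: "set is = W \<and> length is = n" if isS: "is \<in> S" for "is"
  proof -
    have "is \<in> index_set n lam" using isS SN unfolding N_def by blast
    then show ?thesis using idx_set[OF part len] unfolding W_def P_def by simp
  qed
  have WP: "W = set (pad n lam)" unfolding W_def P_def ..
  have ex: "n \<ge> 1 \<and> (\<exists>wst. wst \<in> W \<and> card (W - {wst}) = s \<and> 0 \<notin> W - {wst})"
    unfolding WP by (rule wst_exists[OF part len crd])
  then have n1: "n \<ge> 1" by blast
  from ex obtain wst where wst: "wst \<in> W" "card (W - {wst}) = s" "0 \<notin> W - {wst}" by blast
  define W' where "W' = W - {wst}"
  have fW: "finite W" unfolding W_def by simp
  define ind where "ind is k w = (if is ! k = w then 1 else 0 :: int)" for "is" :: "nat list" and k w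
  define J where "J = insert None (Some ` ({1..<n} \<times> W'))"
  have fJ: "finite J" unfolding J_def W'_def using fW by simp
  have cJ: "card J = Suc ((n - 1) * s)"
  proof -
    have "card (Some ` ({1..<n} \<times> W')) = (n - 1) * s"
      using wst(2) unfolding W'_def by (simp add: card_image card_cartesian_product)
    moreover have "None \<notin> Some ` ({1..<n} \<times> W')" by auto
    moreover have "finite (Some ` ({1..<n} \<times> W'))" using fW unfolding W'_def by simp
    ultimately show ?thesis unfolding J_def by simp
  qed
  define v where "v is j = (case j of None \<Rightarrow> 1 | Some (k, w) \<Rightarrow> ind is k w)" for "is" j
  have "\<exists>e. (\<forall>i\<in>S. e i \<in> (UNIV :: int set)) \<and> (\<exists>i\<in>S. e i \<noteq> 0) \<and> (\<forall>j\<in>J. (\<Sum>i\<in>S. e i * v i j) = 0)"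
    by (rule elim_lemma[where A = UNIV and u = 1]) (use fJ Sf Sc cJ in auto)
  then obtain e where enz: "\<exists>i\<in>S. e i \<noteq> 0" and erel: "\<forall>j\<in>J. (\<Sum>i\<in>S. e i * v i j) = 0" by blast
  have E0: "(\<Sum>i\<in>S. e i) = 0" using erel unfolding J_def v_def by auto
  have E1: "(\<Sum>i\<in>S. e i * ind i k w) = 0" if "k \<in> {1..<n}" "w \<in> W'" for k w
    using erel that unfolding J_def v_def by auto
  have sumW: "(\<Sum>w\<in>W. ind is k w) = 1" if "is \<in> S" "k < n" for "is" k
  proof -
    have "is ! k \<in> W" using WS[OF that(1)] that(2) by (metis nth_mem)
    then show ?thesis unfolding ind_def by (simp add: sum.delta' fW)
  qed
  have E2: "(\<Sum>i\<in>S. e i * ind i k w) = 0" if k: "k \<in> {1..<n}" and w: "w \<in> W" for k w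
  proof (cases "w \<in> W'")
    case True then show ?thesis using E1 k by blast
  next
    case False
    then have ww: "w = wst" using w unfolding W'_def by blast
    have "ind i k wst = 1 - (\<Sum>w\<in>W'. ind i k w)" if "i \<in> S" for i
    proof -
      have "(\<Sum>w\<in>W. ind i k w) = ind i k wst + (\<Sum>w\<in>W'. ind i k w)"
        unfolding W'_def by (rule sum.remove[OF fW wst(1)])
      then show ?thesis using sumW[OF that] k by simp
    qed
    then have "(\<Sum>i\<in>S. e i * ind i k w) = (\<Sum>i\<in>S. e i - (\<Sum>w\<in>W'. e i * ind i k w))"
      unfolding ww by (intro sum.cong) (simp_all add: right_diff_distrib sum_distrib_left)
    also have "\<dots> = (\<Sum>i\<in>S. e i) - (\<Sum>i\<in>S. \<Sum>w\<in>W'. e i * ind i k w)"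
      by (simp add: sum_subtractf)
    also have "(\<Sum>i\<in>S. \<Sum>w\<in>W'. e i * ind i k w) = (\<Sum>w\<in>W'. \<Sum>i\<in>S. e i * ind i k w)"
      by (rule sum.swap)
    finally have "(\<Sum>i\<in>S. e i * ind i k w) = (\<Sum>i\<in>S. e i) - (\<Sum>w\<in>W'. \<Sum>i\<in>S. e i * ind i k w)" .
    then show ?thesis using E0 E1 k by simp
  qed
  have E3: "(\<Sum>i\<in>S. e i * ind i 0 w) = 0" if w: "w \<in> W" for w
  proof -
    define c where "c = int (count (mset P) w)"
    have "ind i 0 w = c - (\<Sum>k\<in>{1..<n}. ind i k w)" if i: "i \<in> S" for i
    proof -
      have "(\<Sum>k<n. ind i k w) = int (count (mset i) w)"
        using count_nth[of i w] WS[OF i] unfolding ind_def by simp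
      also have "mset i = mset P" using SN i idx_iff[OF part len] unfolding N_def P_def by blast
      finally have 1: "(\<Sum>k<n. ind i k w) = c" unfolding c_def .
      have "{..<n} = insert 0 {1..<n}" using n1 by auto
      then have "(\<Sum>k<n. ind i k w) = ind i 0 w + (\<Sum>k\<in>{1..<n}. ind i k w)" by simp
      then show ?thesis using 1 by simp
    qed
    then have "(\<Sum>i\<in>S. e i * ind i 0 w) = (\<Sum>i\<in>S. c * e i - (\<Sum>k\<in>{1..<n}. e i * ind i k w))"
      by (intro sum.cong) (simp_all add: right_diff_distrib sum_distrib_left mult.commute)
    also have "\<dots> = c * (\<Sum>i\<in>S. e i) - (\<Sum>i\<in>S. \<Sum>k\<in>{1..<n}. e i * ind i k w)"
      by (simp add: sum_subtractf sum_distrib_left)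
    also have "(\<Sum>i\<in>S. \<Sum>k\<in>{1..<n}. e i * ind i k w) = (\<Sum>k\<in>{1..<n}. \<Sum>i\<in>S. e i * ind i k w)"
      by (rule sum.swap)
    finally have "(\<Sum>i\<in>S. e i * ind i 0 w) = c * (\<Sum>i\<in>S. e i) - (\<Sum>k\<in>{1..<n}. \<Sum>i\<in>S. e i * ind i k w)" .
    then show ?thesis using E0 E2 w by simp
  qed
  have Eall: "(\<Sum>i\<in>{i\<in>S. i ! k = w}. e i) = 0" if "k < n" "w \<in> W" for k w
  proof -
    have "(\<Sum>i\<in>{i\<in>S. i ! k = w}. e i) = (\<Sum>i\<in>S. e i * ind i k w)"
      unfolding ind_def by (simp add: sum.inter_filter[OF Sf] if_distrib cong: if_cong)
    also have "\<dots> = 0"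
    proof (cases "k = 0")
      case True then show ?thesis using E3 that by simp
    next
      case False then show ?thesis using E2 that by simp
    qed
    finally show ?thesis .
  qed
  define Sp where "Sp = {i\<in>S. e i > 0}"
  define Sm where "Sm = {i\<in>S. e i < 0}"
  define ap where "ap i = nat (e i)" for i
  define am where "am i = nat (- e i)" for i
  have fSp: "finite Sp" and fSm: "finite Sm" unfolding Sp_def Sm_def using Sf by auto
  have apos: "\<forall>i\<in>Sp. ap i > 0" and mpos: "\<forall>i\<in>Sm. am i > 0" unfolding Sp_def Sm_def ap_def am_def by auto
  have expeq: "(\<Sum>i\<in>{i\<in>Sp. i ! k = w}. ap i) = (\<Sum>i\<in>{i\<in>Sm. i ! k = w}. am i)" if "k < n" "w \<in> W" for k w
  proof -
    define A where "A = (\<Sum>i\<in>{i\<in>Sp. i ! k = w}. ap i)"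
    define B where "B = (\<Sum>i\<in>{i\<in>Sm. i ! k = w}. am i)"
    have s1: "{i\<in>{i\<in>S. i ! k = w}. e i > 0} = {i\<in>Sp. i ! k = w}" unfolding Sp_def by auto
    have s2: "{i\<in>{i\<in>S. i ! k = w}. e i < 0} = {i\<in>Sm. i ! k = w}" unfolding Sm_def by auto
    have "(\<Sum>i\<in>{i\<in>S. i ! k = w}. e i) = int (\<Sum>i\<in>{i\<in>{i\<in>S. i ! k = w}. e i > 0}. nat (e i)) - int (\<Sum>i\<in>{i\<in>{i\<in>S. i ! k = w}. e i < 0}. nat (- e i))"
      by (rule sum_sign_split) (use Sf in simp)
    also have "\<dots> = int A - int B" unfolding s1 s2 A_def B_def ap_def am_def ..
    finally have "int A - int B = 0" using Eall[OF that] by simp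
    then show ?thesis unfolding A_def[symmetric] B_def[symmetric] by simp
  qed
  have degeq: "(\<Sum>i\<in>Sp. ap i) = (\<Sum>i\<in>Sm. am i)"
  proof -
    define A where "A = (\<Sum>i\<in>Sp. ap i)"
    define B where "B = (\<Sum>i\<in>Sm. am i)"
    have "(\<Sum>i\<in>S. e i) = int A - int B"
      unfolding A_def B_def Sp_def Sm_def ap_def am_def by (rule sum_sign_split[OF Sf])
    then have "int A - int B = 0" using E0 by simp
    then show ?thesis unfolding A_def[symmetric] B_def[symmetric] by simp
  qed
  have neSm: "Sm \<noteq> {}"
  proof -
    obtain i0 where i0: "i0 \<in> S" "e i0 \<noteq> 0" using enz by blast
    show ?thesis
    proof (cases "e i0 > 0")
      case True
      then have "i0 \<in> Sp" unfolding Sp_def using i0 by simp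
      then have "(\<Sum>i\<in>Sp. ap i) > 0" using apos fSp by (metis sum_pos2 less_imp_le)
      then show ?thesis using degeq by auto
    next
      case False
      then show ?thesis unfolding Sm_def using i0 by auto
    qed
  qed
  define mP where "mP = pmon Sp ap"
  define mM where "mM = pmon Sm am"
  define L where "L = [(1::complex, mP), (-1, mM)]"
  have Lval: "lval L x = (\<Prod>i\<in>Sp. x i ^ ap i) - (\<Prod>i\<in>Sm. x i ^ am i)" for x
    unfolding L_def mP_def mM_def by (simp add: mnm_pmon[OF fSp apos] mnm_pmon[OF fSm mpos])
  have Lvars: "lvars L \<subseteq> S"
    unfolding L_def mP_def mM_def using keys_pmon[OF fSp apos] keys_pmon[OF fSm mpos]
    unfolding Sp_def Sm_def by auto
  have Ldeg: "\<forall>(c, m)\<in>set L. mono_deg m = (\<Sum>i\<in>Sp. ap i)"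
    unfolding L_def mP_def mM_def using deg_pmon[OF fSp apos] deg_pmon[OF fSm mpos] degeq by simp
  define V where "V = {x \<in> proj_points N. lval L x = 0}"
  have clV: "proj_closed N V" unfolding V_def by (rule closed_inter_lval[OF closed_pp Ldeg])
  have "range (moment_point n lam) \<inter> proj_points N \<subseteq> V"
  proof
    fix y assume y: "y \<in> range (moment_point n lam) \<inter> proj_points N"
    then obtain mu where mu: "y = moment_point n lam mu" by blast
    define g where "g k w = (if w = 0 then 1 else mu k w)" for k w
    have yi: "y i = (\<Prod>k<n. g k (i ! k))" if "i \<in> S" for i
      unfolding mu g_def using mp_in[of i n lam mu] SN that unfolding N_def by blast
    have TW: "\<forall>i\<in>T. \<forall>k<n. i ! k \<in> W" if "T \<subseteq> S" for T
      using WS that by (metis nth_mem subsetD)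
    have "(\<Prod>i\<in>Sp. y i ^ ap i) = (\<Prod>i\<in>Sp. (\<Prod>k<n. g k (i ! k)) ^ ap i)"
      using yi unfolding Sp_def by simp
    also have "\<dots> = (\<Prod>k<n. \<Prod>w\<in>W. g k w ^ (\<Sum>i\<in>{i\<in>Sp. i ! k = w}. ap i))"
      by (rule prod_regroup[OF fSp fW TW]) (auto simp: Sp_def)
    also have "\<dots> = (\<Prod>k<n. \<Prod>w\<in>W. g k w ^ (\<Sum>i\<in>{i\<in>Sm. i ! k = w}. am i))"
      using expeq by simp
    also have "\<dots> = (\<Prod>i\<in>Sm. (\<Prod>k<n. g k (i ! k)) ^ am i)"
      by (rule prod_regroup[OF fSm fW TW, symmetric]) (auto simp: Sm_def)
    also have "\<dots> = (\<Prod>i\<in>Sm. y i ^ am i)"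
      using yi unfolding Sm_def by simp
    finally have "lval L y = 0" unfolding Lval by simp
    then show "y \<in> V" unfolding V_def using y by blast
  qed
  then have "X \<subseteq> V" unfolding X by (rule zc_least[OF clV])
  then have "\<forall>x\<in>X. lval L x = 0" unfolding V_def by blast
  moreover have "lval L \<in> PF S" by (rule PF_I[OF Lvars refl])
  ultimately have all0: "\<forall>x. lval L x = 0" using indX unfolding indep_def by blast
  define x0 where "x0 = (\<lambda>i. if i \<in> Sp then 1 else (0::complex))"
  have "(\<Prod>i\<in>Sp. x0 i ^ ap i) = 1" unfolding x0_def by simp
  moreover have "(\<Prod>i\<in>Sm. x0 i ^ am i) = 0"
  proof -
    obtain i where i: "i \<in> Sm" using neSm by blast
    then have "i \<notin> Sp" unfolding Sp_def Sm_def by auto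
    then have "x0 i ^ am i = 0" using mpos i unfolding x0_def by simp
    then show ?thesis using i fSm by (metis prod_zero_iff)
  qed
  ultimately have "lval L x0 = 1" unfolding Lval by simp
  then show False using all0 by simp
qed

theorem theorem4p4:
  fixes n :: nat and lam :: "nat list" and s :: nat
  assumes "is_partition lam"
    and "length lam \<le> n"
    and "s + 1 = card (set (lam @ replicate (n - length lam) 0))"
  shows "proj_dim_eq (index_set n lam) (moment_variety n lam) ((n - 1) * s)"
proof -
  have crd: "s + 1 = card (set (pad n lam))" using assms(3) unfolding pad_def .
  have lo: "has_irred_chain (index_set n lam) (moment_variety n lam) ((n - 1) * s)"
    by (rule lower_chain[OF assms(1,2) crd])
  have hi: "\<not> has_irred_chain (index_set n lam) (moment_variety n lam) (Suc ((n - 1) * s))"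
  proof
    assume "has_irred_chain (index_set n lam) (moment_variety n lam) (Suc ((n - 1) * s))"
    then obtain Z where Z: "\<forall>i\<le>Suc ((n - 1) * s). proj_irreducible (index_set n lam) (Z i) \<and> Z i \<subseteq> moment_variety n lam"
        "\<forall>i<Suc ((n - 1) * s). Z i \<subset> Z (Suc i)"
      unfolding has_irred_chain_def by blast
    obtain S where S: "finite S" "card S = Suc (Suc ((n - 1) * s))" "indep (moment_variety n lam) S"
      using chain_indep[OF Z] by blast
    show False by (rule upper_bound[OF assms(1,2) crd S])
  qed
  show ?thesis unfolding proj_dim_eq_def using lo hi by blast
qed

end
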